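(* Assume $n_2\le n_1$. There is an absolute positive constant $c$ such that for any $\epsilon\le\sqrt{n_1n_2}$, \[ \log N(\epsilon,\mathbb{C}_{\mathsf{Perm}}^{\mathsf{r},\mathsf{c}},\|\cdot\|_F)\le2n_1\log n_1+\Big[c\frac{n_1n_2}{\epsilon^2}\Big(\log\frac{\sqrt{n_1n_2}}{\epsilon}\Big)^2\Big]\wedge\Big(c\,n_1n_2\log\frac{\sqrt{n_1n_2}}{\epsilon}\Big)\wedge\Big(c\frac{\sqrt{n_1n_2}}{\epsilon}n_2\log n_1\Big), \] \[ \log N(\epsilon,\mathbb{C}_{\mathsf{BISO}},\|\cdot\|_F)\le\Big[c\frac{n_1n_2}{\epsilon^2}\Big(\log\frac{\sqrt{n_1n_2}}{\epsilon}\Big)^2\Big]\wedge\Big(c\,n_1n_2\log\frac{\sqrt{n_1n_2}}{\epsilon}\Big)\wedge\Big(c\frac{\sqrt{n_1n_2}}{\epsilon}n_2\log n_1\Big), \] and these metric entropies are zero if $\epsilon>\sqrt{n_1n_2}$. Also, for each $\epsilon\le1$, \[ \log N(\epsilon,\mathbb{C}_{\mathsf{Perm}}^{\mathsf{r},\mathsf{c}},\|\cdot\|_\infty)\le\Big[\frac{n_2}{\epsilon}\log(en_1)\Big]\wedge\Big(n_1n_2\log\frac e\epsilon\Big)+2n_1\log n_1,\qquad \log N(\epsilon,\mathbb{C}_{\mathsf{BISO}},\|\cdot\|_\infty)\le\Big[\frac{n_2}{\epsilon}\log(en_1)\Big]\wedge\Big(n_1n_2\log\frac e\epsilon\Big),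 \] and these metric entropies are zero if $\epsilon>1$.
   Context: $\mathbb{C}_{\mathsf{BISO}}$ is the set of matrices in $[0,1]^{n_1\times n_2}$ with all rows and columns non-decreasing; for permutations $\pi$ of $[n_1]$ and $\sigma$ of $[n_2]$, $[M(\pi,\sigma)]_{i,j}=M_{\pi(i),\sigma(j)}$; $\mathbb{C}_{\mathsf{Perm}}^{\mathsf{r},\mathsf{c}}=\bigcup_{\pi,\sigma}\{M(\pi,\sigma):M\in\mathbb{C}_{\mathsf{BISO}}\}$. For a set $\mathcal C$ with a norm $\|\cdot\|$, $N(\epsilon,\mathcal C,\|\cdot\|)$ is the $\epsilon$-covering number of $\mathcal C$ in $\|\cdot\|$ and $\log N$ its metric entropy. $\|A\|_\infty=\max_{i,j}|A_{i,j}|$; $a\wedge b=\min\{a,b\}$; logarithms natural. *)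

theory Defs
  imports "HOL-Analysis.Analysis" "HOL-Combinatorics.Permutations"
begin

text \<open>An n1 x n2 real matrix is represented as a function nat => nat => real whose
  relevant entries are those with row index < n1 and column index < n2 (0-based);
  matrices in the sets below are extensional (zero outside the index range).\<close>

definition BISO :: "nat \<Rightarrow> nat \<Rightarrow> (nat \<Rightarrow> nat \<Rightarrow> real) set" where
  "BISO n1 n2 = {M.
     (\<forall>i j. i < n1 \<and> j < n2 \<longrightarrow> 0 \<le> M i j \<and> M i j \<le> 1)
   \<and> (\<forall>i j j'. i < n1 \<and> j \<le> j' \<and> j' < n2 \<longrightarrow> M i j \<le> M i j')
   \<and> (\<forall>i i' j. i \<le> i' \<and> i' < n1 \<and> j < n2 \<longrightarrow> M i j \<le> M i' j)
   \<and> (\<forall>i j. \<not> (i < n1 \<and> j < n2) \<longrightarrow> M i j = 0)}"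

definition perm_mat :: "(nat \<Rightarrow> nat \<Rightarrow> real) \<Rightarrow> (nat \<Rightarrow> nat) \<Rightarrow> (nat \<Rightarrow> nat)
    \<Rightarrow> (nat \<Rightarrow> nat \<Rightarrow> real)" where
  "perm_mat M \<pi> \<sigma> = (\<lambda>i j. M (\<pi> i) (\<sigma> j))"

definition Perm_rc :: "nat \<Rightarrow> nat \<Rightarrow> (nat \<Rightarrow> nat \<Rightarrow> real) set" where
  "Perm_rc n1 n2 = (\<Union>\<pi> \<in> {\<pi>. \<pi> permutes {..<n1}}. \<Union>\<sigma> \<in> {\<sigma>. \<sigma> permutes {..<n2}}.
      (\<lambda>M. perm_mat M \<pi> \<sigma>) ` BISO n1 n2)"

definition frob_dist :: "nat \<Rightarrow> nat \<Rightarrow> (nat \<Rightarrow> nat \<Rightarrow> real) \<Rightarrow> (nat \<Rightarrow> nat \<Rightarrow> real) \<Rightarrow> real" where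
  "frob_dist n1 n2 A B = sqrt (\<Sum>i<n1. \<Sum>j<n2. (A i j - B i j)\<^sup>2)"

definition sup_dist :: "nat \<Rightarrow> nat \<Rightarrow> (nat \<Rightarrow> nat \<Rightarrow> real) \<Rightarrow> (nat \<Rightarrow> nat \<Rightarrow> real) \<Rightarrow> real" where
  "sup_dist n1 n2 A B = (MAX (i, j) \<in> {..<n1} \<times> {..<n2}. \<bar>A i j - B i j\<bar>)"

definition covering_number :: "real \<Rightarrow> 'a set \<Rightarrow> ('a \<Rightarrow> 'a \<Rightarrow> real) \<Rightarrow> nat" where
  "covering_number eps C d =
     (LEAST k. \<exists>T. finite T \<and> T \<subseteq> C \<and> card T = k \<and> (\<forall>x\<in>C. \<exists>t\<in>T. d x t \<le> eps))"

end

theory Submission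
  imports Defs
begin

definition covers where
  "covers eps C d T \<longleftrightarrow> finite T \<and> T \<subseteq> C \<and> (\<forall>x\<in>C. \<exists>t\<in>T. d x t \<le> eps)"

lemma cov_le: "covers eps C d T \<Longrightarrow> covering_number eps C d \<le> card T"
  unfolding covering_number_def covers_def by (rule Least_le) blast

lemma cov_ex: assumes "covers eps C d T"
  shows "\<exists>T'. covers eps C d T' \<and> card T' = covering_number eps C d"
proof -
  have "\<exists>T'. finite T' \<and> T' \<subseteq> C \<and> card T' = covering_number eps C d \<and> (\<forall>x\<in>C. \<exists>t\<in>T'. d x t \<le> eps)"
    unfolding covering_number_def
    by (rule LeastI[of _ "card T"]) (use assms in \<open>auto simp: covers_def\<close>)
  then show ?thesis unfolding covers_def by blast
qed

lemma cov_pos: assumes "covers eps C d T" "C \<noteq> {}"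
  shows "1 \<le> covering_number eps C d"
proof -
  obtain T' where T': "covers eps C d T'" "card T' = covering_number eps C d"
    using cov_ex[OF assms(1)] by blast
  then have "T' \<noteq> {}" using assms(2) unfolding covers_def by fastforce
  then show ?thesis using T' unfolding covers_def by (metis card_0_eq less_one not_le)
qed

lemma cov_code:
  assumes "finite S" "\<forall>x\<in>C. E x \<in> S" "\<forall>x\<in>C. \<forall>y\<in>C. E x = E y \<longrightarrow> d x y \<le> eps"
  shows "\<exists>T. covers eps C d T \<and> card T \<le> card S"
proof -
  define T where "T = (\<lambda>s. SOME x. x \<in> C \<and> E x = s) ` (E ` C)"
  have sub: "E ` C \<subseteq> S" using assms(2) by blast
  have fin: "finite T" unfolding T_def using finite_subset[OF sub assms(1)] by blast
  have c: "card T \<le> card S" unfolding T_def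
    by (meson assms(1) card_image_le card_mono finite_subset le_trans sub)
  have mem: "\<And>x. x \<in> C \<Longrightarrow> (SOME y. y \<in> C \<and> E y = E x) \<in> C \<and> E (SOME y. y \<in> C \<and> E y = E x) = E x"
    by (rule someI_ex) blast
  have "T \<subseteq> C" unfolding T_def using mem by blast
  moreover have "\<forall>x\<in>C. \<exists>t\<in>T. d x t \<le> eps"
  proof
    fix x assume x: "x \<in> C"
    let ?t = "SOME y. y \<in> C \<and> E y = E x"
    have "?t \<in> T" unfolding T_def using x by blast
    moreover have "d x ?t \<le> eps" using assms(3) x mem[OF x] by metis
    ultimately show "\<exists>t\<in>T. d x t \<le> eps" by blast
  qed
  ultimately show ?thesis using fin c unfolding covers_def by blast
qed

lemma ln_cov_code:
  assumes "finite S" "\<forall>x\<in>C. E x \<in> S" "\<forall>x\<in>C. \<forall>y\<in>C. E x = E y \<longrightarrow> d x y \<le> eps" "C \<noteq> {}"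
  shows "ln (real (covering_number eps C d)) \<le> ln (real (card S))"
    and "\<exists>T. covers eps C d T"
proof -
  obtain T where T: "covers eps C d T" "card T \<le> card S" using cov_code[OF assms(1-3)] by blast
  have "1 \<le> covering_number eps C d" using cov_pos[OF T(1) assms(4)] .
  moreover have "covering_number eps C d \<le> card S" using cov_le[OF T(1)] T(2) by linarith
  ultimately show "ln (real (covering_number eps C d)) \<le> ln (real (card S))" by simp
  show "\<exists>T. covers eps C d T" using T by blast
qed

lemma geo_aux: "(\<Sum>a\<le>T. (2::nat) ^ (T - a)) < 2 ^ Suc T"
proof (induction T)
  case 0 then show ?case by simp
next
  case (Suc T)
  have "(\<Sum>a\<le>Suc T. (2::nat) ^ (Suc T - a)) = (\<Sum>a\<le>T. 2 ^ (Suc T - a)) + 1" by simp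
  also have "(\<Sum>a\<le>T. (2::nat) ^ (Suc T - a)) = 2 * (\<Sum>a\<le>T. 2 ^ (T - a))"
    by (simp add: sum_distrib_left Suc_diff_le)
  finally show ?case using Suc by simp
qed

lemma card_bsum:
  assumes "finite D"
  shows "finite {f \<in> D \<rightarrow>\<^sub>E (UNIV::nat set). sum f D \<le> T} \<and>
         card {f \<in> D \<rightarrow>\<^sub>E (UNIV::nat set). sum f D \<le> T} \<le> 2 ^ (card D + T)"
  using assms
proof (induction D arbitrary: T rule: finite_induct)
  case empty
  then show ?case by simp
next
  case (insert x F)
  let ?A = "\<lambda>D T. {f \<in> D \<rightarrow>\<^sub>E (UNIV::nat set). sum f D \<le> T}"
  have sub: "?A (insert x F) T \<subseteq> (\<Union>a\<in>{..T}. (\<lambda>g. g(x := a)) ` ?A F (T - a))"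
  proof
    fix f assume f: "f \<in> ?A (insert x F) T"
    have fx: "f x \<le> T" using f insert(1,2) by auto
    have "sum f (insert x F) = f x + sum f F" using insert(1,2) by simp
    then have "restrict f F \<in> ?A F (T - f x)" using f by (auto simp: PiE_def)
    moreover have "f = (restrict f F)(x := f x)"
      using f insert(2) by (auto simp: PiE_def extensional_def fun_eq_iff)
    ultimately show "f \<in> (\<Union>a\<in>{..T}. (\<lambda>g. g(x := a)) ` ?A F (T - a))" using fx by blast
  qed
  have fin: "finite (\<Union>a\<in>{..T}. (\<lambda>g. g(x := a)) ` ?A F (T - a))" using insert(3) by blast
  have "card (?A (insert x F) T) \<le> card (\<Union>a\<in>{..T}. (\<lambda>g. g(x := a)) ` ?A F (T - a))"
    by (rule card_mono[OF fin sub])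
  also have "\<dots> \<le> (\<Sum>a\<le>T. card ((\<lambda>g. g(x := a)) ` ?A F (T - a)))" by (rule card_UN_le) simp
  also have "\<dots> \<le> (\<Sum>a\<le>T. 2 ^ (card F + (T - a)))"
    proof (rule sum_mono)
    fix a
    have "card ((\<lambda>g. g(x := a)) ` ?A F (T - a)) \<le> card (?A F (T - a))"
      using insert.IH[of "T - a"] by (intro card_image_le) blast
    then show "card ((\<lambda>g. g(x := a)) ` ?A F (T - a)) \<le> 2 ^ (card F + (T - a))"
      using insert.IH[of "T - a"] by linarith
  qed
  also have "\<dots> = 2 ^ card F * (\<Sum>a\<le>T. 2 ^ (T - a))" unfolding sum_distrib_left
    by (rule sum.cong) (auto simp: power_add[symmetric])
  also have "\<dots> \<le> 2 ^ card F * 2 ^ Suc T" using geo_aux[of T] by simp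
  also have "\<dots> = 2 ^ (card (insert x F) + T)" using insert(1,2) by (simp add: power_add)
  finally show ?case using finite_subset[OF sub fin] by blast
qed

definition mono_sq :: "nat \<Rightarrow> (nat \<Rightarrow> nat \<Rightarrow> real) \<Rightarrow> bool" where
  "mono_sq P M \<longleftrightarrow> (\<forall>i j. i < P \<and> j < P \<longrightarrow> 0 \<le> M i j \<and> M i j \<le> 1) \<and>
     (\<forall>i i' j j'. i \<le> i' \<and> j \<le> j' \<and> i' < P \<and> j' < P \<longrightarrow> M i j \<le> M i' j')"

definition hh :: "nat \<Rightarrow> nat \<Rightarrow> nat" where "hh K l = 2 ^ (K - l)"
definition lo :: "nat \<Rightarrow> (nat \<Rightarrow> nat \<Rightarrow> real) \<Rightarrow> nat \<Rightarrow> nat \<times> nat \<Rightarrow> real" where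
  "lo K M l b = M (fst b * hh K l) (snd b * hh K l)"
definition hi :: "nat \<Rightarrow> (nat \<Rightarrow> nat \<Rightarrow> real) \<Rightarrow> nat \<Rightarrow> nat \<times> nat \<Rightarrow> real" where
  "hi K M l b = M ((fst b + 1) * hh K l - 1) ((snd b + 1) * hh K l - 1)"
definition osc :: "nat \<Rightarrow> (nat \<Rightarrow> nat \<Rightarrow> real) \<Rightarrow> nat \<Rightarrow> nat \<times> nat \<Rightarrow> real" where
  "osc K M l b = hi K M l b - lo K M l b"
definition tau :: "nat \<Rightarrow> nat \<Rightarrow> real" where "tau m l = 2 ^ l / 2 ^ m"

lemma tau_pos: "tau m l > 0" by (simp add: tau_def)
lemma tau_Suc: "tau m (Suc l) = 2 * tau m l" by (simp add: tau_def)

lemma hh_pos: "hh K l > 0" by (simp add: hh_def)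
lemma hh_Suc: "Suc l \<le> K \<Longrightarrow> hh K l = 2 * hh K (Suc l)"
  by (simp add: hh_def) (metis Suc_diff_Suc Suc_le_lessD power_Suc)
lemma hh_mult: "l \<le> K \<Longrightarrow> 2 ^ l * hh K l = (2::nat) ^ K"
  by (simp add: hh_def flip: power_add)

lemma idx_bound: assumes "l \<le> K" "a < 2 ^ l" shows "(a + 1) * hh K l - 1 < 2 ^ K"
  and "a * hh K l \<le> (a + 1) * hh K l - 1" and "(a + 1) * hh K l \<le> 2 ^ K"
proof -
  have "(a + 1) * hh K l \<le> 2 ^ l * hh K l" using assms(2) by (intro mult_right_mono) auto
  then show "(a + 1) * hh K l \<le> 2 ^ K" using hh_mult[OF assms(1)] by simp
  then show "(a + 1) * hh K l - 1 < 2 ^ K" using hh_pos[of K l] by (simp add: less_imp_diff_less)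
  show "a * hh K l \<le> (a + 1) * hh K l - 1" using hh_pos[of K l] by simp
qed

lemma mono_sqD: assumes "mono_sq P M"
  shows "\<And>i j. i < P \<Longrightarrow> j < P \<Longrightarrow> 0 \<le> M i j"
    "\<And>i j. i < P \<Longrightarrow> j < P \<Longrightarrow> M i j \<le> 1"
    "\<And>i i' j j'. i \<le> i' \<Longrightarrow> j \<le> j' \<Longrightarrow> i' < P \<Longrightarrow> j' < P \<Longrightarrow> M i j \<le> M i' j'"
  using assms unfolding mono_sq_def by blast+

lemma lo_hi:
  assumes M: "mono_sq (2^K) M" and l: "l \<le> K" and b: "fst b < 2 ^ l" "snd b < 2 ^ l"
  shows "0 \<le> lo K M l b" "lo K M l b \<le> hi K M l b" "hi K M l b \<le> 1"
    "0 \<le> osc K M l b" "osc K M l b \<le> 1"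
proof -
  note ib1 = idx_bound[OF l b(1)] and ib2 = idx_bound[OF l b(2)]
  show "0 \<le> lo K M l b" unfolding lo_def using ib1 ib2 by (intro mono_sqD(1)[OF M]) linarith+
  show "lo K M l b \<le> hi K M l b" unfolding lo_def hi_def using ib1 ib2 by (intro mono_sqD(3)[OF M]) auto
  show "hi K M l b \<le> 1" unfolding hi_def using ib1 ib2 by (intro mono_sqD(2)[OF M]) auto
  then show "0 \<le> osc K M l b" "osc K M l b \<le> 1" unfolding osc_def
    using \<open>0 \<le> lo K M l b\<close> \<open>lo K M l b \<le> hi K M l b\<close> by linarith+
qed

lemma cell_in_block:
  assumes M: "mono_sq (2^K) M" and l: "l \<le> K" and i: "i < 2^K" and j: "j < 2^K"
  shows "lo K M l (i div hh K l, j div hh K l) \<le> M i j" "M i j \<le> hi K M l (i div hh K l, j div hh K l)"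
    "i div hh K l < 2 ^ l" "j div hh K l < 2 ^ l"
proof -
  have hp: "hh K l > 0" by (rule hh_pos)
  show a: "i div hh K l < 2 ^ l" using i hh_mult[OF l] hp
    by (metis div_less_iff_less_mult mult.commute)
  show b: "j div hh K l < 2 ^ l" using j hh_mult[OF l] hp
    by (metis div_less_iff_less_mult mult.commute)
  have i1: "i div hh K l * hh K l \<le> i" "j div hh K l * hh K l \<le> j" by auto
  have i2: "i \<le> (i div hh K l + 1) * hh K l - 1" "j \<le> (j div hh K l + 1) * hh K l - 1"
  proof -
    have "x < (x div hh K l + 1) * hh K l" for x
    proof -
      have "x = x div hh K l * hh K l + x mod hh K l" by (rule div_mult_mod_eq[symmetric])
      moreover have "x mod hh K l < hh K l" using hp by simp
      moreover have "(x div hh K l + 1) * hh K l = x div hh K l * hh K l + hh K l" by simp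
      ultimately show ?thesis by linarith
    qed
    note q = this
    show "i \<le> (i div hh K l + 1) * hh K l - 1" using q[of i] by linarith
    show "j \<le> (j div hh K l + 1) * hh K l - 1" using q[of j] by linarith
  qed
  show "lo K M l (i div hh K l, j div hh K l) \<le> M i j" unfolding lo_def using i1 i j
    by (intro mono_sqD(3)[OF M]) auto
  show "M i j \<le> hi K M l (i div hh K l, j div hh K l)" unfolding hi_def
    using i2 idx_bound(1)[OF l a] idx_bound(1)[OF l b] by (intro mono_sqD(3)[OF M]) auto
qed

lemma child_rel:
  assumes M: "mono_sq (2^K) M" and l: "Suc l \<le> K" and b: "fst b < 2 ^ Suc l" "snd b < 2 ^ Suc l"
  defines "p \<equiv> (fst b div 2, snd b div 2)"
  shows "lo K M l p \<le> lo K M (Suc l) b" "hi K M (Suc l) b \<le> hi K M l p"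
    "lo K M (Suc l) b \<le> hi K M l p" "osc K M (Suc l) b \<le> osc K M l p"
    "fst p < 2 ^ l" "snd p < 2 ^ l"
proof -
  have hS: "hh K l = 2 * hh K (Suc l)" by (rule hh_Suc[OF l])
  show pa: "fst p < 2 ^ l" "snd p < 2 ^ l" unfolding p_def using b by auto
  note ibp1 = idx_bound[OF _ pa(1)] and ibp2 = idx_bound[OF _ pa(2)]
  have l': "l \<le> K" using l by simp
  have e1: "x div 2 * hh K l \<le> x * hh K (Suc l)" for x
  proof -
    have "x div 2 * 2 \<le> x" by simp
    then have "x div 2 * 2 * hh K (Suc l) \<le> x * hh K (Suc l)" by (rule mult_right_mono) simp
    then show ?thesis unfolding hS by (simp add: mult.assoc mult.commute mult.left_commute)
  qed
  have e2: "(x + 1) * hh K (Suc l) - 1 \<le> (x div 2 + 1) * hh K l - 1" for x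
  proof -
    have "x + 1 \<le> 2 * (x div 2 + 1)" by presburger
    then have "(x + 1) * hh K (Suc l) \<le> 2 * (x div 2 + 1) * hh K (Suc l)"
      by (rule mult_right_mono) simp
    then have "(x + 1) * hh K (Suc l) \<le> (x div 2 + 1) * hh K l" unfolding hS
      by (simp add: mult.assoc mult.commute mult.left_commute)
    then show ?thesis by simp
  qed
  show "lo K M l p \<le> lo K M (Suc l) b" unfolding lo_def p_def
    using idx_bound[OF l b(1)] idx_bound[OF l b(2)]
    by (intro mono_sqD(3)[OF M]) (auto simp: e1 intro: le_less_trans)
  have h0: "M ((fst b + 1) * hh K (Suc l) - 1) ((snd b + 1) * hh K (Suc l) - 1)
      \<le> M ((fst b div 2 + 1) * hh K l - 1) ((snd b div 2 + 1) * hh K l - 1)"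
    using mono_sqD(3)[OF M e2[of "fst b"] e2[of "snd b"]] ibp1(1)[OF l'] ibp2(1)[OF l']
    unfolding p_def by simp
  show h: "hi K M (Suc l) b \<le> hi K M l p" unfolding hi_def p_def using h0 by simp
  have "lo K M (Suc l) b \<le> hi K M (Suc l) b" using lo_hi(2)[OF M l b] .
  then show "lo K M (Suc l) b \<le> hi K M l p" using h by linarith
  show "osc K M (Suc l) b \<le> osc K M l p" unfolding osc_def
    using h \<open>lo K M l p \<le> lo K M (Suc l) b\<close> by linarith
qed


lemma osc_sum:
  assumes M: "mono_sq (2^K) M" and l: "l \<le> K"
  shows "(\<Sum>a<2^l. \<Sum>b<2^l. osc K M l (a,b)) \<le> 2 * 2 ^ l"
proof -
  define n :: nat where "n = 2 ^ l"
  define h where "h = hh K l"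
  define P :: nat where "P = 2 ^ K"
  have P0: "P > 0" unfolding P_def by simp
  define G where "G a b = M (min (a*h) (P-1)) (min (b*h) (P-1))" for a b
  have ix: "min x (P-1) < P" for x using P0 by linarith
  have G01: "0 \<le> G a b" "G a b \<le> 1" for a b
    unfolding G_def using mono_sqD(1,2)[OF M, of "min (a*h) (P-1)" "min (b*h) (P-1)"] ix
    unfolding P_def by auto
  have osc_le: "osc K M l (a,b) \<le> (G (Suc a) (Suc b) - G (Suc a) b) + (G (Suc a) b - G a b)"
    if a: "a < n" and b: "b < n" for a b
  proof -
    note ia = idx_bound[OF l a[unfolded n_def]] and ib = idx_bound[OF l b[unfolded n_def]]
    have "lo K M l (a,b) = G a b" unfolding lo_def G_def h_def P_def using ia ib by auto
    moreover have "hi K M l (a,b) \<le> G (Suc a) (Suc b)" unfolding hi_def G_def h_def P_def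
      using ia ib by (intro mono_sqD(3)[OF M]) auto
    ultimately show ?thesis unfolding osc_def by linarith
  qed
  have s1: "(\<Sum>a<n. \<Sum>b<n. G (Suc a) (Suc b) - G (Suc a) b) \<le> real n"
  proof -
    have "(\<Sum>a<n. \<Sum>b<n. G (Suc a) (Suc b) - G (Suc a) b) = (\<Sum>a<n. G (Suc a) n - G (Suc a) 0)"
      by (simp add: sum_lessThan_telescope)
    also have "\<dots> \<le> (\<Sum>a<n. 1)"
    proof (rule sum_mono)
      fix a show "G (Suc a) n - G (Suc a) 0 \<le> 1" using G01[of "Suc a" n] G01[of "Suc a" 0] by linarith
    qed
    finally show ?thesis by simp
  qed
  have s2: "(\<Sum>a<n. \<Sum>b<n. G (Suc a) b - G a b) \<le> real n"
  proof -
    have "(\<Sum>a<n. \<Sum>b<n. G (Suc a) b - G a b) = (\<Sum>b<n. \<Sum>a<n. G (Suc a) b - G a b)"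
      by (rule sum.swap)
    also have "\<dots> = (\<Sum>b<n. G n b - G 0 b)"
      by (rule sum.cong[OF refl]) (rule sum_lessThan_telescope)
    also have "\<dots> \<le> (\<Sum>b<n. 1)"
    proof (rule sum_mono)
      fix b show "G n b - G 0 b \<le> 1" using G01[of n b] G01[of 0 b] by linarith
    qed
    finally show ?thesis by simp
  qed
  have "(\<Sum>a<n. \<Sum>b<n. osc K M l (a,b)) \<le>
      (\<Sum>a<n. \<Sum>b<n. (G (Suc a) (Suc b) - G (Suc a) b) + (G (Suc a) b - G a b))"
    by (intro sum_mono osc_le) auto
  also have "\<dots> = (\<Sum>a<n. \<Sum>b<n. G (Suc a) (Suc b) - G (Suc a) b) + (\<Sum>a<n. \<Sum>b<n. G (Suc a) b - G a b)"
    by (simp only: sum.distrib)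
  also have "\<dots> \<le> 2 * real n" using s1 s2 by linarith
  finally show ?thesis unfolding n_def by simp
qed

definition Spl :: "nat \<Rightarrow> nat \<Rightarrow> (nat \<Rightarrow> nat \<Rightarrow> real) \<Rightarrow> nat \<Rightarrow> (nat \<times> nat) set" where
  "Spl K m M l = {b. fst b < 2^l \<and> snd b < 2^l \<and> tau m l < osc K M l b}"

lemma Spl_fin: "finite (Spl K m M l)"
  by (rule finite_subset[of _ "{..<2^l} \<times> {..<2^l}"]) (auto simp: Spl_def)

lemma Spl_card:
  assumes M: "mono_sq (2^K) M" and l: "l \<le> K"
  shows "card (Spl K m M l) \<le> 2 * 2 ^ m"
proof -
  let ?A = "{..<(2::nat)^l} \<times> {..<(2::nat)^l}"
  have sub: "Spl K m M l \<subseteq> ?A" by (auto simp: Spl_def)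
  have "real (card (Spl K m M l)) * tau m l = (\<Sum>b\<in>Spl K m M l. tau m l)" by simp
  also have "\<dots> \<le> (\<Sum>b\<in>Spl K m M l. osc K M l b)"
    by (rule sum_mono) (auto simp: Spl_def)
  also have "\<dots> \<le> (\<Sum>b\<in>?A. osc K M l b)"
    by (rule sum_mono2) (use sub lo_hi(4)[OF M l] in auto)
  also have "\<dots> = (\<Sum>a<2^l. \<Sum>b<2^l. osc K M l (a,b))" by (simp add: sum.cartesian_product)
  also have "\<dots> \<le> 2 * 2 ^ l" by (rule osc_sum[OF M l])
  finally have "real (card (Spl K m M l)) * (2 ^ l / 2 ^ m) \<le> 2 * 2 ^ l" unfolding tau_def .
  then have "real (card (Spl K m M l)) * (2 ^ l / 2 ^ m) * 2 ^ m \<le> 2 * 2 ^ l * 2 ^ m"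
    by (rule mult_right_mono) simp
  then have "real (card (Spl K m M l)) * 2 ^ l \<le> (2 * 2 ^ m) * 2 ^ l"
    by (simp add: mult.assoc mult.commute mult.left_commute)
  then have "real (card (Spl K m M l)) \<le> 2 * 2 ^ m"
    by (rule mult_right_le_imp_le) simp
  then show ?thesis by (metis of_nat_le_iff of_nat_mult of_nat_numeral of_nat_power)
qed

definition ch :: "(nat \<times> nat) set \<Rightarrow> (nat \<times> nat) set" where
  "ch S = {b. (fst b div 2, snd b div 2) \<in> S}"

lemma ch_sub: "ch S \<subseteq> (\<lambda>(p,q). (2 * fst p + fst q, 2 * snd p + snd q)) ` (S \<times> ({..<2} \<times> {..<2}))"
proof
  fix b assume b: "b \<in> ch S"
  have "b = (\<lambda>(p,q). (2 * fst p + fst q, 2 * snd p + snd q)) ((fst b div 2, snd b div 2), (fst b mod 2, snd b mod 2))" by simp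
  moreover have "((fst b div 2, snd b div 2), (fst b mod 2, snd b mod 2)) \<in> S \<times> ({..<2} \<times> {..<2})"
    using b by (auto simp: ch_def)
  ultimately show "b \<in> (\<lambda>(p,q). (2 * fst p + fst q, 2 * snd p + snd q)) ` (S \<times> ({..<2} \<times> {..<2}))"
    by (rule image_eqI)
qed

lemma ch_card: assumes "finite S" shows "finite (ch S)" "card (ch S) \<le> 4 * card S"
proof -
  let ?I = "S \<times> ({..<(2::nat)} \<times> {..<(2::nat)})"
  let ?f = "(\<lambda>(p,q). (2 * fst p + fst q, 2 * snd p + snd q)) :: (nat \<times> nat) \<times> (nat \<times> nat) \<Rightarrow> nat \<times> nat"
  have fI: "finite ?I" using assms by simp
  show "finite (ch S)" by (rule finite_subset[OF ch_sub]) (use fI in blast)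
  have "card (ch S) \<le> card (?f ` ?I)" by (rule card_mono[OF _ ch_sub]) (use fI in blast)
  also have "\<dots> \<le> card ?I" by (rule card_image_le[OF fI])
  also have "\<dots> = 4 * card S" by (simp add: card_cartesian_product)
  finally show "card (ch S) \<le> 4 * card S" .
qed

fun Dom :: "nat \<Rightarrow> nat \<Rightarrow> (nat \<Rightarrow> nat \<Rightarrow> real) \<Rightarrow> nat \<Rightarrow> (nat \<times> nat) set" where
  "Dom K m M 0 = {(0,0)}"
| "Dom K m M (Suc l) = ch (Spl K m M l)"

lemma Spl_sub_Dom:
  assumes M: "mono_sq (2^K) M" and l: "l \<le> K"
  shows "Spl K m M l \<subseteq> Dom K m M l"
proof (cases l)
  case 0
  then show ?thesis by (auto simp: Spl_def)
next
  case (Suc l')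
  show ?thesis
  proof
    fix b assume b: "b \<in> Spl K m M l"
    have bb: "fst b < 2 ^ Suc l'" "snd b < 2 ^ Suc l'" using b Suc by (auto simp: Spl_def)
    note cr = child_rel[OF M l[unfolded Suc] bb]
    have "tau m l' < osc K M l' (fst b div 2, snd b div 2)"
      using b Suc cr(4) tau_Suc[of m l'] tau_pos[of m l'] by (auto simp: Spl_def)
    then show "b \<in> Dom K m M l" using Suc cr(5,6) by (auto simp: Spl_def ch_def)
  qed
qed

lemma Dom_range: "b \<in> Dom K m M l \<Longrightarrow> fst b < 2 ^ l \<and> snd b < 2 ^ l"
  by (cases l) (auto simp: ch_def Spl_def)

lemma Dom_fin: "finite (Dom K m M l)"
  by (cases l) (auto simp: ch_card(1)[OF Spl_fin])

lemma Dom_card: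
  assumes M: "mono_sq (2^K) M" and l: "l \<le> K"
  shows "card (Dom K m M l) \<le> 8 * 2 ^ m"
proof (cases l)
  case 0
  then show ?thesis by auto
next
  case (Suc l')
  have "card (Dom K m M l) \<le> 4 * card (Spl K m M l')" using Suc ch_card(2)[OF Spl_fin] by simp
  also have "\<dots> \<le> 4 * (2 * 2 ^ m)" using Spl_card[OF M, of l' m] l Suc by simp
  finally show ?thesis by simp
qed

definition Qv :: "nat \<Rightarrow> nat \<Rightarrow> (nat \<Rightarrow> nat \<Rightarrow> real) \<Rightarrow> nat \<Rightarrow> nat \<times> nat \<Rightarrow> int" where
  "Qv K m M l b = \<lfloor>lo K M l b / tau m l\<rfloor>"

fun Ev :: "nat \<Rightarrow> nat \<Rightarrow> (nat \<Rightarrow> nat \<Rightarrow> real) \<Rightarrow> nat \<Rightarrow> nat \<times> nat \<Rightarrow> nat" where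
  "Ev K m M 0 b = nat (Qv K m M 0 b)"
| "Ev K m M (Suc l) b = nat (Qv K m M (Suc l) b - \<lfloor>lo K M l (fst b div 2, snd b div 2) / tau m (Suc l)\<rfloor>)"

definition lcode where
  "lcode K m M l = (Spl K m M l, restrict (Ev K m M l) (Dom K m M l))"

definition code where
  "code K m M = map (lcode K m M) [0..<Suc (min K m)]"

definition Yc :: "nat \<Rightarrow> (nat \<times> nat) set \<Rightarrow> ((nat \<times> nat) set \<times> (nat \<times> nat \<Rightarrow> nat)) set" where
  "Yc m D = {c. fst c \<subseteq> D \<and> card (fst c) \<le> 2 * 2 ^ m \<and> snd c \<in> D \<rightarrow>\<^sub>E (UNIV::nat set)
      \<and> sum (snd c) D \<le> 12 * 2 ^ m}"

fun codes :: "nat \<Rightarrow> nat \<Rightarrow> ((nat \<times> nat) set \<times> (nat \<times> nat \<Rightarrow> nat)) list set" where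
  "codes m 0 = (\<lambda>y. [y]) ` Yc m {(0,0)}"
| "codes m (Suc l) = (\<Union>xs\<in>codes m l. (\<lambda>y. xs @ [y]) ` Yc m (ch (fst (last xs))))"

lemma osc_Spl_sum:
  assumes M: "mono_sq (2^K) M" and l: "l \<le> K"
  shows "(\<Sum>b\<in>Spl K m M l. osc K M l b) \<le> 2 * 2 ^ l"
proof -
  let ?A = "{..<(2::nat)^l} \<times> {..<(2::nat)^l}"
  have sub: "Spl K m M l \<subseteq> ?A" by (auto simp: Spl_def)
  have "(\<Sum>b\<in>Spl K m M l. osc K M l b) \<le> (\<Sum>b\<in>?A. osc K M l b)"
    by (rule sum_mono2) (use sub lo_hi(4)[OF M l] in auto)
  also have "\<dots> = (\<Sum>a<2^l. \<Sum>b<2^l. osc K M l (a,b))" by (simp add: sum.cartesian_product)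
  also have "\<dots> \<le> 2 * 2 ^ l" by (rule osc_sum[OF M l])
  finally show ?thesis .
qed

lemma ch_eq: "ch S = (\<lambda>(p,q). (2 * fst p + fst q, 2 * snd p + snd q)) ` (S \<times> ({..<2} \<times> {..<2}))"
  by (rule subset_antisym[OF ch_sub]) (auto simp: ch_def)

lemma Ev_sum:
  assumes M: "mono_sq (2^K) M" and l: "Suc l \<le> K"
  shows "sum (Ev K m M (Suc l)) (Dom K m M (Suc l)) \<le> 12 * 2 ^ m"
proof -
  define S where "S = Spl K m M l"
  define t where "t = tau m (Suc l)"
  have t0: "t > 0" unfolding t_def by (rule tau_pos)
  have l': "l \<le> K" using l by simp
  define g where "g b = osc K M l (fst b div 2, snd b div 2) / t + 1" for b
  have Evb: "real (Ev K m M (Suc l) b) \<le> g b" if b: "b \<in> ch S" for b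
  proof -
    have br: "fst b < 2 ^ Suc l" "snd b < 2 ^ Suc l" using Dom_range[of b K m M "Suc l"] b S_def by auto
    note cr = child_rel[OF M l br]
    define x where "x = lo K M (Suc l) b"
    define y where "y = lo K M l (fst b div 2, snd b div 2)"
    have xy: "y \<le> x" "x - y \<le> osc K M l (fst b div 2, snd b div 2)"
      using cr(1,3) unfolding x_def y_def osc_def by auto
    have fl: "\<lfloor>y / t\<rfloor> \<le> \<lfloor>x / t\<rfloor>" using xy(1) t0 by (intro floor_mono divide_right_mono) auto
    have "real (Ev K m M (Suc l) b) = real_of_int (\<lfloor>x / t\<rfloor> - \<lfloor>y / t\<rfloor>)"
      using fl unfolding x_def y_def t_def by (simp add: Qv_def)
    also have "\<dots> \<le> x / t - (y / t - 1)"
      using of_int_floor_le[of "x/t"] real_of_int_floor_add_one_gt[of "y/t"] by linarith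
    also have "\<dots> = (x - y) / t + 1" by (simp add: diff_divide_distrib)
    also have "\<dots> \<le> g b" unfolding g_def using xy(2) t0 by (simp add: divide_right_mono)
    finally show ?thesis .
  qed
  let ?I = "S \<times> ({..<(2::nat)} \<times> {..<(2::nat)})"
  let ?f = "(\<lambda>(p,q). (2 * fst p + fst q, 2 * snd p + snd q)) :: (nat \<times> nat) \<times> (nat \<times> nat) \<Rightarrow> nat \<times> nat"
  have finS: "finite S" unfolding S_def by (rule Spl_fin)
  have gnn: "0 \<le> g (?f i)" if iI: "i \<in> ?I" for i
  proof -
    obtain p q where i: "i = (p,q)" "p \<in> S" "q \<in> {..<2} \<times> {..<2}" using iI by force
    have "fst p < 2 ^ l" "snd p < 2 ^ l" using i(2) unfolding S_def Spl_def by auto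
    then have "0 \<le> osc K M l p" by (rule lo_hi(4)[OF M l'])
    moreover have "(fst (?f i) div 2, snd (?f i) div 2) = p" using i by auto
    ultimately show ?thesis unfolding g_def using t0 by simp
  qed
  have "real (sum (Ev K m M (Suc l)) (Dom K m M (Suc l))) = (\<Sum>b\<in>ch S. real (Ev K m M (Suc l) b))"
    unfolding S_def by simp
  also have "\<dots> \<le> (\<Sum>b\<in>ch S. g b)" by (rule sum_mono) (rule Evb)
  also have "\<dots> = (\<Sum>b\<in>?f ` ?I. g b)" unfolding ch_eq ..
  also have "\<dots> \<le> (\<Sum>i\<in>?I. g (?f i))" using sum_image_le[of ?I g ?f] finS gnn by (simp add: comp_def)
  also have "\<dots> = (\<Sum>p\<in>S. \<Sum>q\<in>{..<(2::nat)} \<times> {..<(2::nat)}. osc K M l p / t + 1)"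
    unfolding sum.cartesian_product by (rule sum.cong) (auto simp: g_def)
  also have "\<dots> = (\<Sum>p\<in>S. 4 * (osc K M l p / t) + 4)" by (simp add: algebra_simps)
  also have "\<dots> = 4 / t * (\<Sum>p\<in>S. osc K M l p) + 4 * real (card S)"
    by (simp add: sum.distrib sum_distrib_left)
  also have "\<dots> \<le> 4 / t * (2 * 2 ^ l) + 4 * (2 * 2 ^ m)"
  proof -
    have "(\<Sum>p\<in>S. osc K M l p) \<le> 2 * 2 ^ l" unfolding S_def by (rule osc_Spl_sum[OF M l'])
    moreover have "real (card S) \<le> 2 * 2 ^ m" using Spl_card[OF M l', of m] unfolding S_def
      by (metis of_nat_le_iff of_nat_mult of_nat_numeral of_nat_power)
    ultimately show ?thesis using t0 by (intro add_mono mult_left_mono) auto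
  qed
  also have "4 / t * (2 * 2 ^ l) = 4 * (2::real) ^ m"
    unfolding t_def tau_def by (simp add: field_simps)
  finally have "real (sum (Ev K m M (Suc l)) (Dom K m M (Suc l))) \<le> 12 * 2 ^ m" by simp
  then show ?thesis by (metis of_nat_le_iff of_nat_mult of_nat_numeral of_nat_power)
qed

lemma Ev_sum0:
  assumes M: "mono_sq (2^K) M"
  shows "sum (Ev K m M 0) (Dom K m M 0) \<le> 12 * 2 ^ m"
proof -
  have "0 \<le> M 0 0" "M 0 0 \<le> 1" using mono_sqD(1,2)[OF M, of 0 0] by auto
  then have "\<lfloor>M 0 0 * 2 ^ m\<rfloor> \<le> \<lfloor>(2::real) ^ m\<rfloor>"
    by (intro floor_mono) (simp add: mult_left_le_one_le)
  then have A: "nat \<lfloor>M 0 0 * 2 ^ m\<rfloor> \<le> 2 ^ m" by (simp add: nat_le_iff)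
  have "sum (Ev K m M 0) (Dom K m M 0) = nat \<lfloor>M 0 0 * 2 ^ m\<rfloor>" by (simp add: Qv_def lo_def tau_def)
  then show ?thesis using le_trans[OF A, of "12 * 2 ^ m"] by simp
qed

lemma lcode_in:
  assumes M: "mono_sq (2^K) M" and l: "l \<le> K"
  shows "lcode K m M l \<in> Yc m (Dom K m M l)"
proof -
  have "sum (Ev K m M l) (Dom K m M l) \<le> 12 * 2 ^ m"
    using Ev_sum0[OF M] Ev_sum[OF M] l by (cases l) auto
  moreover have "sum (restrict (Ev K m M l) (Dom K m M l)) (Dom K m M l) = sum (Ev K m M l) (Dom K m M l)"
    by (rule sum.cong) auto
  ultimately show ?thesis unfolding lcode_def Yc_def
    using Spl_sub_Dom[OF M l] Spl_card[OF M l] by auto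
qed

lemma codes_in:
  assumes M: "mono_sq (2^K) M"
  shows "l \<le> K \<Longrightarrow> map (lcode K m M) [0..<Suc l] \<in> codes m l"
proof (induction l)
  case 0
  then show ?case using lcode_in[OF M, of 0 m] by simp
next
  case (Suc l)
  have "map (lcode K m M) [0..<Suc (Suc l)] = map (lcode K m M) [0..<Suc l] @ [lcode K m M (Suc l)]"
    by simp
  moreover have "fst (last (map (lcode K m M) [0..<Suc l])) = Spl K m M l" by (simp add: lcode_def)
  moreover have "lcode K m M (Suc l) \<in> Yc m (ch (Spl K m M l))"
    using lcode_in[OF M Suc.prems] by simp
  moreover have "map (lcode K m M) [0..<Suc l] \<in> codes m l" using Suc by simp
  ultimately show ?case unfolding codes.simps
    by (metis (no_types, lifting) UN_I imageI)
qed

lemma Yc_card: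
  assumes "finite D" "card D \<le> 8 * 2 ^ m"
  shows "finite (Yc m D)" "card (Yc m D) \<le> 2 ^ (28 * 2 ^ m)"
proof -
  let ?B = "{f \<in> D \<rightarrow>\<^sub>E (UNIV::nat set). sum f D \<le> 12 * 2 ^ m}"
  have sub: "Yc m D \<subseteq> Pow D \<times> ?B" unfolding Yc_def by auto
  note cb = card_bsum[OF assms(1), of "12 * 2 ^ m"]
  have fin: "finite (Pow D \<times> ?B)" using cb assms(1) by simp
  show "finite (Yc m D)" by (rule finite_subset[OF sub fin])
  have "card (Yc m D) \<le> card (Pow D \<times> ?B)" by (rule card_mono[OF fin sub])
  also have "\<dots> = 2 ^ card D * card ?B" by (simp add: card_cartesian_product card_Pow assms(1))
  also have "\<dots> \<le> 2 ^ card D * 2 ^ (card D + 12 * 2 ^ m)" using cb by simp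
  also have "\<dots> = 2 ^ (card D + (card D + 12 * 2 ^ m))" by (rule power_add[symmetric])
  also have "\<dots> \<le> 2 ^ (28 * 2 ^ m)" using assms(2) by (intro power_increasing) auto
  finally show "card (Yc m D) \<le> 2 ^ (28 * 2 ^ m)" .
qed

lemma codes_card:
  "finite (codes m l) \<and> card (codes m l) \<le> (2 ^ (28 * 2 ^ m)) ^ Suc l \<and>
   (\<forall>xs\<in>codes m l. finite (fst (last xs)) \<and> card (fst (last xs)) \<le> 2 * 2 ^ m)"
proof (induction l)
  case 0
  have f: "finite (Yc m {(0,0)})" "card (Yc m {(0,0)}) \<le> 2 ^ (28 * 2 ^ m)"
    using Yc_card[of "{(0,0)}" m] by auto
  have "card ((\<lambda>y. [y]) ` Yc m {(0,0)}) \<le> 2 ^ (28 * 2 ^ m)"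
    using card_image_le[OF f(1), of "\<lambda>y. [y]"] f(2) by linarith
  moreover have "\<forall>xs\<in>codes m 0. finite (fst (last xs)) \<and> card (fst (last xs)) \<le> 2 * 2 ^ m"
    by (auto simp: Yc_def intro: finite_subset)
  ultimately show ?case using f by simp
next
  case (Suc l)
  have Y: "finite (Yc m (ch (fst (last xs)))) \<and> card (Yc m (ch (fst (last xs)))) \<le> 2 ^ (28 * 2 ^ m)"
    if "xs \<in> codes m l" for xs
  proof -
    have a: "finite (fst (last xs))" "card (fst (last xs)) \<le> 2 * 2 ^ m" using Suc.IH that by auto
    have "card (ch (fst (last xs))) \<le> 8 * 2 ^ m" using ch_card(2)[OF a(1)] a(2) by linarith
    then show ?thesis using Yc_card[OF ch_card(1)[OF a(1)]] by blast
  qed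
  have fin: "finite (codes m (Suc l))" using Suc.IH Y by auto
  have "card (codes m (Suc l)) \<le> (\<Sum>xs\<in>codes m l. card ((\<lambda>y. xs @ [y]) ` Yc m (ch (fst (last xs)))))"
    unfolding codes.simps by (rule card_UN_le) (use Suc.IH in blast)
  also have "\<dots> \<le> (\<Sum>xs\<in>codes m l. 2 ^ (28 * 2 ^ m))"
    by (rule sum_mono) (meson Y card_image_le le_trans)
  also have "\<dots> = card (codes m l) * 2 ^ (28 * 2 ^ m)" by simp
  also have "\<dots> \<le> (2 ^ (28 * 2 ^ m)) ^ Suc l * 2 ^ (28 * 2 ^ m)" using Suc.IH by simp
  also have "\<dots> = (2 ^ (28 * 2 ^ m)) ^ Suc (Suc l)" by simp
  finally have c: "card (codes m (Suc l)) \<le> (2 ^ (28 * 2 ^ m)) ^ Suc (Suc l)" .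
  have "\<forall>zs\<in>codes m (Suc l). finite (fst (last zs)) \<and> card (fst (last zs)) \<le> 2 * 2 ^ m"
  proof
    fix zs assume "zs \<in> codes m (Suc l)"
    then obtain xs y where xy: "xs \<in> codes m l" "y \<in> Yc m (ch (fst (last xs)))" "zs = xs @ [y]" by auto
    have a: "finite (fst (last xs))" using Suc.IH xy(1) by blast
    have "fst y \<subseteq> ch (fst (last xs))" "card (fst y) \<le> 2 * 2 ^ m" using xy(2) by (auto simp: Yc_def)
    then show "finite (fst (last zs)) \<and> card (fst (last zs)) \<le> 2 * 2 ^ m"
      using xy(3) finite_subset[OF _ ch_card(1)[OF a]] by auto
  qed
  then show ?case using fin c by blast
qed

lemma floor_half: fixes x t :: real assumes "t > 0" shows "\<lfloor>x / (2 * t)\<rfloor> = \<lfloor>x / t\<rfloor> div 2"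
proof -
  have "\<lfloor>x / (2 * t)\<rfloor> = \<lfloor>(x / t) / real_of_int 2\<rfloor>" by (simp add: mult.commute)
  also have "\<dots> = \<lfloor>x / t\<rfloor> div 2" by (rule floor_divide_real_eq_div) simp
  finally show ?thesis .
qed

lemma floor_eq_close: fixes x y t :: real assumes t: "t > 0" and e: "\<lfloor>x / t\<rfloor> = \<lfloor>y / t\<rfloor>" shows "\<bar>x - y\<bar> < t"
proof -
  define u where "u = x / t"
  define v where "v = y / t"
  define a where "a = real_of_int \<lfloor>x / t\<rfloor>"
  have 1: "a \<le> u" "u < a + 1" unfolding a_def u_def by simp_all
  have 2: "a \<le> v" "v < a + 1" unfolding a_def v_def e by simp_all
  have "u - v < 1" "v - u < 1" using 1 2 by linarith+
  moreover have "(x - y) / t = u - v" "(y - x) / t = v - u" unfolding u_def v_def by (simp_all add: diff_divide_distrib)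
  ultimately have "(x - y) / t < 1" "(y - x) / t < 1" by simp_all
  then have "x - y < t" "y - x < t" using t by (simp_all add: divide_less_eq)
  then show ?thesis by (simp add: abs_less_iff)
qed

lemma code_nth: "l \<le> min K m \<Longrightarrow> code K m M ! l = lcode K m M l"
proof -
  assume "l \<le> min K m"
  then have "l < length [0..<Suc (min K m)]" by (simp only: length_upt)
  then show ?thesis unfolding code_def by (simp del: upt_Suc add: nth_map)
qed

lemma cnt:
  assumes l: "l \<le> K" and D: "finite D"
  shows "(\<Sum>i<(2::nat)^K. \<Sum>j<(2::nat)^K. (of_bool ((i div hh K l, j div hh K l) \<in> D) :: real))
         \<le> real (card D) * real (hh K l) ^ 2"
proof -
  define h where "h = hh K l"
  have h0: "h > 0" unfolding h_def by (rule hh_pos)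
  let ?A = "{..<(2::nat)^K}"
  let ?B = "(\<Union>b\<in>D. {fst b * h..<(fst b + 1) * h} \<times> {snd b * h..<(snd b + 1) * h})"
  have lt: "x < (x div h + 1) * h" for x
  proof -
    have "x = x div h * h + x mod h" by (rule div_mult_mod_eq[symmetric])
    moreover have "x mod h < h" using h0 by simp
    moreover have "(x div h + 1) * h = x div h * h + h" by simp
    ultimately show ?thesis by linarith
  qed
  have sub: "(?A \<times> ?A) \<inter> {c. (fst c div h, snd c div h) \<in> D} \<subseteq> ?B"
  proof
    fix c assume c: "c \<in> (?A \<times> ?A) \<inter> {c. (fst c div h, snd c div h) \<in> D}"
    have "fst c \<in> {fst c div h * h..<(fst c div h + 1) * h}" using lt[of "fst c"] by simp
    moreover have "snd c \<in> {snd c div h * h..<(snd c div h + 1) * h}" using lt[of "snd c"] by simp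
    ultimately show "c \<in> ?B" using c by (intro UN_I[of "(fst c div h, snd c div h)"]) (auto simp: mem_Times_iff)
  qed
  have "(\<Sum>i\<in>?A. \<Sum>j\<in>?A. (of_bool ((i div h, j div h) \<in> D) :: real))
      = (\<Sum>c\<in>?A \<times> ?A. (of_bool ((fst c div h, snd c div h) \<in> D) :: real))"
    by (subst sum.cartesian_product) (rule sum.cong, auto)
  also have "\<dots> = real (card ((?A \<times> ?A) \<inter> {c. (fst c div h, snd c div h) \<in> D}))" by simp
  also have "\<dots> \<le> real (card ?B)" using D by (intro of_nat_mono card_mono[OF _ sub]) auto
  also have "card ?B \<le> (\<Sum>b\<in>D. card ({fst b * h..<(fst b + 1) * h} \<times> {snd b * h..<(snd b + 1) * h}))"
    by (rule card_UN_le[OF D])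
  also have "\<dots> = (\<Sum>b\<in>D. h * h)" by (rule sum.cong) (auto simp: card_cartesian_product)
  finally show ?thesis unfolding h_def by (simp add: power2_eq_square)
qed

theorem sq_err:
  assumes M: "mono_sq (2^K) M" and M': "mono_sq (2^K) M'" and eq: "code K m M = code K m M'"
  shows "(\<Sum>i<(2::nat)^K. \<Sum>j<(2::nat)^K. (M i j - M' i j)^2) \<le> 72 * real (Suc (min K m)) * 4 ^ K / 2 ^ m"
proof -
  define Lm where "Lm = min K m"
  have LmK: "Lm \<le> K" by (simp add: Lm_def)
  have lc: "lcode K m M l = lcode K m M' l" if "l \<le> Lm" for l
    using code_nth[of l K m M] code_nth[of l K m M'] eq that Lm_def by metis
  have SplEq: "Spl K m M l = Spl K m M' l" if "l \<le> Lm" for l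
    using lc[OF that] by (simp add: lcode_def)
  have DomEq: "Dom K m M l = Dom K m M' l" if "l \<le> Lm" for l
  proof (cases l)
    case 0 then show ?thesis by simp
  next
    case (Suc l') then show ?thesis using SplEq[of l'] that by simp
  qed
  have EvEq: "Ev K m M l b = Ev K m M' l b" if "l \<le> Lm" "b \<in> Dom K m M l" for l b
  proof -
    have "restrict (Ev K m M l) (Dom K m M l) = restrict (Ev K m M' l) (Dom K m M' l)"
      using lc[OF that(1)] by (simp add: lcode_def)
    then show ?thesis using that DomEq[OF that(1)] by (metis restrict_apply')
  qed
  have QEq: "l \<le> Lm \<Longrightarrow> b \<in> Dom K m M l \<Longrightarrow> Qv K m M l b = Qv K m M' l b" for l b
  proof (induction l arbitrary: b)
    case 0
    have b: "b = (0,0)" using 0 by simp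
    have "0 \<le> lo K M 0 b" "0 \<le> lo K M' 0 b"
      using lo_hi(1)[OF M, of 0 b] lo_hi(1)[OF M', of 0 b] b by auto
    then have "0 \<le> Qv K m M 0 b" "0 \<le> Qv K m M' 0 b"
      using tau_pos[of m 0] by (auto simp: Qv_def)
    then show ?case using EvEq[OF 0(1) 0(2)] by simp
  next
    case (Suc l)
    let ?p = "(fst b div 2, snd b div 2)"
    have lK: "Suc l \<le> K" using Suc.prems LmK by simp
    have br: "fst b < 2^Suc l" "snd b < 2^Suc l" using Dom_range[OF Suc.prems(2)] by auto
    have pS: "?p \<in> Spl K m M l" using Suc.prems(2) by (simp add: ch_def)
    have pD: "?p \<in> Dom K m M l" using Spl_sub_Dom[OF M, of l m] pS lK by auto
    have IH: "Qv K m M l ?p = Qv K m M' l ?p" using Suc.IH[OF _ pD] Suc.prems by simp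
    have fh: "\<lfloor>lo K N l ?p / tau m (Suc l)\<rfloor> = Qv K m N l ?p div 2" for N
      unfolding Qv_def tau_Suc by (rule floor_half[OF tau_pos])
    have nn: "\<lfloor>lo K N l ?p / tau m (Suc l)\<rfloor> \<le> Qv K m N (Suc l) b" if N: "mono_sq (2^K) N" for N
      unfolding Qv_def using child_rel(1)[OF N lK br] tau_pos[of m "Suc l"]
      by (intro floor_mono divide_right_mono) auto
    have "nat (Qv K m M (Suc l) b - \<lfloor>lo K M l ?p / tau m (Suc l)\<rfloor>)
         = nat (Qv K m M' (Suc l) b - \<lfloor>lo K M' l ?p / tau m (Suc l)\<rfloor>)"
      using EvEq[OF Suc.prems] by simp
    then have "Qv K m M (Suc l) b - \<lfloor>lo K M l ?p / tau m (Suc l)\<rfloor>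
             = Qv K m M' (Suc l) b - \<lfloor>lo K M' l ?p / tau m (Suc l)\<rfloor>"
      using nn[OF M] nn[OF M'] by (subst (asm) eq_nat_nat_iff) auto
    then show ?case using fh[of M] fh[of M'] IH by simp
  qed
  define blk where "blk l i j = (i div hh K l, j div hh K l)" for l i j
  have SplLm: "Spl K m M Lm = {}"
  proof -
    have "\<not> tau m Lm < osc K M Lm b" if b: "fst b < 2^Lm" "snd b < 2^Lm" for b
    proof (cases "Lm = m")
      case True
      then show ?thesis using lo_hi(5)[OF M LmK b] by (simp add: tau_def)
    next
      case False
      then have "Lm = K" unfolding Lm_def by auto
      then have "osc K M Lm b = 0" by (simp add: osc_def hi_def lo_def hh_def)
      then show ?thesis using tau_pos[of m Lm] by simp
    qed
    then show ?thesis by (auto simp: Spl_def)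
  qed
  have cell: "(M i j - M' i j)^2 \<le> (\<Sum>l\<le>Lm. 9 * tau m l ^ 2 * of_bool (blk l i j \<in> Dom K m M l))"
    if ij: "i < 2^K" "j < 2^K" for i j
  proof -
    define L where "L = (LEAST l. blk l i j \<notin> Spl K m M l)"
    have ex: "blk Lm i j \<notin> Spl K m M Lm" using SplLm by simp
    have Lle: "L \<le> Lm" unfolding L_def by (rule Least_le) (rule ex)
    have nS: "blk L i j \<notin> Spl K m M L" unfolding L_def by (rule LeastI[of _ Lm]) (rule ex)
    have lK: "L \<le> K" using Lle LmK by simp
    have inD: "blk L i j \<in> Dom K m M L"
    proof (cases L)
      case 0
      then show ?thesis using ij by (simp add: blk_def hh_def)
    next
      case (Suc l)
      have "blk l i j \<in> Spl K m M l"
        using not_less_Least[of l "\<lambda>l. blk l i j \<notin> Spl K m M l"] Suc L_def by auto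
      moreover have "(fst (blk L i j) div 2, snd (blk L i j) div 2) = blk l i j"
      proof -
        have h2: "hh K l = hh K (Suc l) * 2" using hh_Suc[of l K] lK Suc by simp
        have "x div hh K (Suc l) div 2 = x div hh K l" for x unfolding h2 by (rule div_mult2_eq[symmetric])
        then show ?thesis using Suc by (simp add: blk_def)
      qed
      ultimately show ?thesis using Suc by (simp add: ch_def)
    qed
    define b where "b = blk L i j"
    note cb = cell_in_block[OF M lK ij] and cb' = cell_in_block[OF M' lK ij]
    have o1: "osc K M L b \<le> tau m L" using nS cb(3,4) unfolding b_def blk_def Spl_def by auto
    have o2: "osc K M' L b \<le> tau m L" using nS cb(3,4) SplEq[OF Lle] unfolding b_def blk_def Spl_def by auto
    have "Qv K m M L b = Qv K m M' L b" using QEq[OF Lle inD] unfolding b_def .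
    then have cl: "\<bar>lo K M L b - lo K M' L b\<bar> < tau m L"
      unfolding Qv_def by (rule floor_eq_close[OF tau_pos])
    have "\<bar>M i j - M' i j\<bar> \<le> 2 * tau m L"
      using cb(1,2) cb'(1,2) o1 o2 cl unfolding b_def blk_def osc_def abs_le_iff abs_less_iff by linarith
    then have "\<bar>M i j - M' i j\<bar> ^ 2 \<le> (2 * tau m L) ^ 2" by (rule power_mono) simp
    then have "(M i j - M' i j)^2 \<le> 4 * tau m L ^ 2" by (simp add: power_mult_distrib)
    moreover have "4 * tau m L ^ 2 \<le> 9 * tau m L ^ 2" by simp
    ultimately have "(M i j - M' i j)^2 \<le> 9 * tau m L ^ 2" by linarith
    also have "\<dots> = 9 * tau m L ^ 2 * of_bool (blk L i j \<in> Dom K m M L)" using inD by simp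
    also have "\<dots> \<le> (\<Sum>l\<le>Lm. 9 * tau m l ^ 2 * of_bool (blk l i j \<in> Dom K m M l))"
      by (rule member_le_sum) (use Lle in auto)
    finally show ?thesis .
  qed
  let ?g = "\<lambda>l i j. 9 * tau m l ^ 2 * (of_bool (blk l i j \<in> Dom K m M l) :: real)"
  have "(\<Sum>i<(2::nat)^K. \<Sum>j<(2::nat)^K. (M i j - M' i j)^2) \<le> (\<Sum>i<(2::nat)^K. \<Sum>j<(2::nat)^K. \<Sum>l\<le>Lm. ?g l i j)"
    by (intro sum_mono cell) auto
  also have "\<dots> = (\<Sum>i<(2::nat)^K. \<Sum>l\<le>Lm. \<Sum>j<(2::nat)^K. ?g l i j)"
    by (rule sum.cong[OF refl]) (rule sum.swap)
  also have "\<dots> = (\<Sum>l\<le>Lm. \<Sum>i<(2::nat)^K. \<Sum>j<(2::nat)^K. ?g l i j)" by (rule sum.swap)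
  also have "\<dots> = (\<Sum>l\<le>Lm. 9 * tau m l ^ 2 * (\<Sum>i<(2::nat)^K. \<Sum>j<(2::nat)^K. (of_bool (blk l i j \<in> Dom K m M l) :: real)))"
    by (simp only: sum_distrib_left)
  also have "\<dots> \<le> (\<Sum>l\<le>Lm. 72 * 4 ^ K / 2 ^ m)"
  proof (rule sum_mono)
    fix l assume "l \<in> {..Lm}"
    then have lK: "l \<le> K" using LmK by simp
    have th: "tau m l * real (hh K l) = 2 ^ K / 2 ^ m"
    proof -
      have "(2::real) ^ l * 2 ^ (K - l) = 2 ^ K" using lK by (simp flip: power_add)
      then show ?thesis by (simp add: tau_def hh_def)
    qed
    have "9 * tau m l ^ 2 * (\<Sum>i<(2::nat)^K. \<Sum>j<(2::nat)^K. (of_bool (blk l i j \<in> Dom K m M l) :: real))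
        \<le> 9 * tau m l ^ 2 * (real (card (Dom K m M l)) * real (hh K l) ^ 2)"
      unfolding blk_def by (intro mult_left_mono cnt[OF lK Dom_fin]) auto
    also have "\<dots> \<le> 9 * tau m l ^ 2 * (8 * 2 ^ m * real (hh K l) ^ 2)"
    proof -
      have "real (card (Dom K m M l)) \<le> 8 * 2 ^ m" using Dom_card[OF M lK, of m]
        by (metis of_nat_le_iff of_nat_mult of_nat_numeral of_nat_power)
      then show ?thesis by (intro mult_left_mono mult_right_mono) auto
    qed
    also have "\<dots> = 72 * 2 ^ m * (tau m l * real (hh K l)) ^ 2" by (simp add: power_mult_distrib)
    also have "\<dots> = 72 * 4 ^ K / 2 ^ m" unfolding th by (simp add: power_divide power2_eq_square field_simps flip: power_mult_distrib)
    finally show "9 * tau m l ^ 2 * (\<Sum>i<(2::nat)^K. \<Sum>j<(2::nat)^K. (of_bool (blk l i j \<in> Dom K m M l) :: real)) \<le> 72 * 4 ^ K / 2 ^ m" .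
  qed
  also have "\<dots> = 72 * real (Suc (min K m)) * 4 ^ K / 2 ^ m" by (simp add: Lm_def)
  finally show ?thesis .
qed

definition GG :: "real \<Rightarrow> nat" where "GG e = nat \<lceil>1 / e\<rceil>"
definition qz :: "real \<Rightarrow> real \<Rightarrow> nat" where "qz e x = min (nat \<lfloor>x / e\<rfloor>) (GG e - 1)"

lemma GG_ge: "e > 0 \<Longrightarrow> 1 \<le> GG e \<and> 1 \<le> real (GG e) * e"
proof -
  assume e: "e > 0"
  have "1 / e \<le> real_of_int \<lceil>1 / e\<rceil>" by simp
  moreover have "0 < 1 / e" using e by simp
  ultimately have "1 / e \<le> real (GG e)" "1 \<le> GG e" unfolding GG_def by linarith+
  then show ?thesis using e by (simp add: divide_le_eq)
qed

lemma GG_le: "e > 0 \<Longrightarrow> real (GG e) < 1 / e + 1"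
proof -
  assume e: "e > 0"
  have "real_of_int \<lceil>1 / e\<rceil> < 1 / e + 1" using ceiling_correct[of "1/e"] by linarith
  moreover have "0 < 1 / e" using e by simp
  ultimately show ?thesis unfolding GG_def by linarith
qed

lemma qz_lt: "e > 0 \<Longrightarrow> qz e x < GG e"
  using GG_ge[of e] unfolding qz_def by linarith

lemma qz_mono: "e > 0 \<Longrightarrow> x \<le> y \<Longrightarrow> qz e x \<le> qz e y"
  unfolding qz_def by (intro min.mono nat_mono floor_mono divide_right_mono) auto

lemma qz_close:
  assumes e: "e > 0" and x: "0 \<le> x" "x \<le> 1" and y: "0 \<le> y" "y \<le> 1" and q: "qz e x = qz e y"
  shows "\<bar>x - y\<bar> \<le> e"
proof (cases "nat \<lfloor>x / e\<rfloor> < GG e - 1")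
  case True
  then have ny: "nat \<lfloor>y / e\<rfloor> = nat \<lfloor>x / e\<rfloor>" using q unfolding qz_def by (auto simp: min_def split: if_splits)
  have "0 \<le> \<lfloor>x / e\<rfloor>" "0 \<le> \<lfloor>y / e\<rfloor>" using x y e by simp_all
  then have "int (nat \<lfloor>x / e\<rfloor>) = \<lfloor>x / e\<rfloor>" "int (nat \<lfloor>y / e\<rfloor>) = \<lfloor>y / e\<rfloor>" by simp_all
  then have "\<lfloor>x / e\<rfloor> = \<lfloor>y / e\<rfloor>" using ny by metis
  then show ?thesis using floor_eq_close[OF e] by (simp add: less_imp_le)
next
  case False
  then have Fy: "\<not> nat \<lfloor>y / e\<rfloor> < GG e - 1" using q unfolding qz_def by (auto simp: min_def split: if_splits)
  have low: "real (GG e - 1) * e \<le> z" if "\<not> nat \<lfloor>z / e\<rfloor> < GG e - 1" "0 \<le> z" for z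
  proof -
    have a: "GG e - 1 \<le> nat \<lfloor>z / e\<rfloor>" using that(1) by simp
    have b: "0 \<le> \<lfloor>z / e\<rfloor>" using that(2) e by simp
    have "int (GG e - 1) \<le> \<lfloor>z / e\<rfloor>" using a le_nat_iff[OF b] by simp
    then have "real (GG e - 1) \<le> z / e" using le_floor_iff[of "int (GG e - 1)" "z / e"] by simp
    then show ?thesis using e by (simp add: le_divide_eq)
  qed
  have g: "1 \<le> real (GG e) * e" "1 \<le> GG e" using GG_ge[OF e] by auto
  have "real (GG e - 1) * e = real (GG e) * e - e" using g(2) by (simp add: of_nat_diff algebra_simps)
  then show ?thesis using low[OF False x(1)] low[OF Fy y(1)] x(2) y(2) g(1) by linarith
qed

lemma downset_card:
  assumes dc: "\<And>i i'. i \<le> i' \<Longrightarrow> i' < n \<Longrightarrow> P i' \<Longrightarrow> P i" and i: "i < n"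
  shows "P i \<longleftrightarrow> i < card {i. i < n \<and> P i}"
proof
  assume Pi: "P i"
  have "{..i} \<subseteq> {i. i < n \<and> P i}" using dc Pi i by auto
  then have "card {..i} \<le> card {i. i < n \<and> P i}" by (intro card_mono) auto
  then show "i < card {i. i < n \<and> P i}" by simp
next
  assume c: "i < card {i. i < n \<and> P i}"
  show "P i"
  proof (rule ccontr)
    assume "\<not> P i"
    then have "{i. i < n \<and> P i} \<subseteq> {..<i}"
    proof (intro subsetI)
      fix x assume nP: "\<not> P i" and "x \<in> {i. i < n \<and> P i}"
      then show "x \<in> {..<i}" using dc[of i x] by (cases "x < i") auto
    qed
    then have "card {i. i < n \<and> P i} \<le> i" using card_mono[of "{..<i}"] by fastforce
    then show False using c by simp
  qed
qed

definition E1 :: "nat \<Rightarrow> nat \<Rightarrow> real \<Rightarrow> (nat \<Rightarrow> nat \<Rightarrow> real) \<Rightarrow> nat \<times> nat \<Rightarrow> nat" where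
  "E1 n1 n2 e M = restrict (\<lambda>(k,j). card {i. i < n1 \<and> qz e (M i j) < k}) ({1..<GG e} \<times> {..<n2})"
definition E2 :: "nat \<Rightarrow> nat \<Rightarrow> real \<Rightarrow> (nat \<Rightarrow> nat \<Rightarrow> real) \<Rightarrow> nat \<times> nat \<Rightarrow> nat" where
  "E2 n1 n2 e M = restrict (\<lambda>(i,j). qz e (M i j)) ({..<n1} \<times> {..<n2})"

lemma BISO_D: assumes "M \<in> BISO n1 n2"
  shows "\<And>i j. i < n1 \<Longrightarrow> j < n2 \<Longrightarrow> 0 \<le> M i j \<and> M i j \<le> 1"
    "\<And>i i' j. i \<le> i' \<Longrightarrow> i' < n1 \<Longrightarrow> j < n2 \<Longrightarrow> M i j \<le> M i' j"
    "\<And>i j j'. i < n1 \<Longrightarrow> j \<le> j' \<Longrightarrow> j' < n2 \<Longrightarrow> M i j \<le> M i j'"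
  using assms unfolding BISO_def by blast+

lemma E1_in: "E1 n1 n2 e M \<in> ({1..<GG e} \<times> {..<n2}) \<rightarrow>\<^sub>E {0..n1}"
proof -
  have "card {i. i < n1 \<and> P i} \<le> n1" for P
    using card_mono[of "{..<n1}" "{i. i < n1 \<and> P i}"] by auto
  then show ?thesis unfolding E1_def by auto
qed

lemma E2_in: "e > 0 \<Longrightarrow> E2 n1 n2 e M \<in> ({..<n1} \<times> {..<n2}) \<rightarrow>\<^sub>E {..<GG e}"
  unfolding E2_def using qz_lt by auto

lemma E1_close:
  assumes e: "e > 0" and M: "M \<in> BISO n1 n2" and M': "M' \<in> BISO n1 n2"
    and eq: "E1 n1 n2 e M = E1 n1 n2 e M'" and ij: "i < n1" "j < n2"
  shows "\<bar>M i j - M' i j\<bar> \<le> e"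
proof -
  have thr: "qz e (N i j) < k \<longleftrightarrow> i < card {i. i < n1 \<and> qz e (N i j) < k}"
    if N: "N \<in> BISO n1 n2" for N k
  proof (rule downset_card[OF _ ij(1)])
    fix a a' assume "a \<le> a'" "a' < n1" "qz e (N a' j) < k"
    then show "qz e (N a j) < k" using qz_mono[OF e BISO_D(2)[OF N _ _ ij(2)]] by (meson le_less_trans)
  qed
  have same: "qz e (M i j) < k \<longleftrightarrow> qz e (M' i j) < k" if k: "k \<in> {1..<GG e}" for k
  proof -
    have "E1 n1 n2 e M (k,j) = E1 n1 n2 e M' (k,j)" using eq by simp
    then have "card {i. i < n1 \<and> qz e (M i j) < k} = card {i. i < n1 \<and> qz e (M' i j) < k}"
      using k ij unfolding E1_def by simp
    then show ?thesis using thr[OF M, of k] thr[OF M', of k] by simp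
  qed
  have "qz e (M i j) = qz e (M' i j)"
  proof (rule ccontr)
    assume ne: "qz e (M i j) \<noteq> qz e (M' i j)"
    show False
    proof (cases "qz e (M i j) < qz e (M' i j)")
      case True
      then show False using same[of "qz e (M' i j)"] qz_lt[OF e, of "M' i j"] by auto
    next
      case False
      then have "qz e (M' i j) < qz e (M i j)" using ne by simp
      then show False using same[of "qz e (M i j)"] qz_lt[OF e, of "M i j"] by auto
    qed
  qed
  then show ?thesis using qz_close[OF e] BISO_D(1)[OF M ij] BISO_D(1)[OF M' ij] by blast
qed

lemma E2_close:
  assumes e: "e > 0" and M: "M \<in> BISO n1 n2" and M': "M' \<in> BISO n1 n2"
    and eq: "E2 n1 n2 e M = E2 n1 n2 e M'" and ij: "i < n1" "j < n2"
  shows "\<bar>M i j - M' i j\<bar> \<le> e"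
proof -
  have "E2 n1 n2 e M (i,j) = E2 n1 n2 e M' (i,j)" using eq by simp
  then have "qz e (M i j) = qz e (M' i j)" using ij unfolding E2_def by simp
  then show ?thesis using qz_close[OF e] BISO_D(1)[OF M ij] BISO_D(1)[OF M' ij] by blast
qed

lemma entry_sup:
  assumes "\<And>i j. i < n1 \<Longrightarrow> j < n2 \<Longrightarrow> \<bar>A i j - B i j\<bar> \<le> e" "1 \<le> n1" "1 \<le> n2"
  shows "sup_dist n1 n2 A B \<le> e"
  unfolding sup_dist_def using assms by (subst Max_le_iff) (auto simp: lessThan_empty_iff)

lemma entry_frob:
  assumes "\<And>i j. i < n1 \<Longrightarrow> j < n2 \<Longrightarrow> \<bar>A i j - B i j\<bar> \<le> e" "0 \<le> e"
  shows "frob_dist n1 n2 A B \<le> sqrt (real n1 * real n2) * e"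
proof -
  have "(\<Sum>i<n1. \<Sum>j<n2. (A i j - B i j)\<^sup>2) \<le> (\<Sum>i<n1. \<Sum>j<n2. e\<^sup>2)"
  proof (intro sum_mono)
    fix i j assume "i \<in> {..<n1}" "j \<in> {..<n2}"
    then have "\<bar>A i j - B i j\<bar> \<le> e" using assms(1) by simp
    then have "\<bar>A i j - B i j\<bar>\<^sup>2 \<le> e\<^sup>2" by (rule power_mono) simp
    then show "(A i j - B i j)\<^sup>2 \<le> e\<^sup>2" by simp
  qed
  also have "\<dots> = (real n1 * real n2) * e\<^sup>2" by simp
  finally have "frob_dist n1 n2 A B \<le> sqrt ((real n1 * real n2) * e\<^sup>2)"
    unfolding frob_dist_def by (rule real_sqrt_le_mono)
  also have "\<dots> = sqrt (real n1 * real n2) * e" using assms(2) by (simp add: real_sqrt_mult)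
  finally show ?thesis .
qed

lemma BISO_ne: "(\<lambda>i j. 0) \<in> BISO n1 n2" unfolding BISO_def by auto

lemma sup_codes_ln:
  assumes e: "e > 0" and n: "1 \<le> n1" "1 \<le> n2"
    and dd: "\<And>A B. A \<in> BISO n1 n2 \<Longrightarrow> B \<in> BISO n1 n2 \<Longrightarrow>
        (\<forall>i j. i < n1 \<and> j < n2 \<longrightarrow> \<bar>A i j - B i j\<bar> \<le> e) \<Longrightarrow> d A B \<le> eps"
  shows "ln (real (covering_number eps (BISO n1 n2) d)) \<le> real (GG e - 1) * real n2 * ln (real n1 + 1)"
    "ln (real (covering_number eps (BISO n1 n2) d)) \<le> real n1 * real n2 * ln (real (GG e))"
    "\<exists>T. covers eps (BISO n1 n2) d T"
proof -
  let ?S1 = "({1..<GG e} \<times> {..<n2}) \<rightarrow>\<^sub>E {0..n1}"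
  let ?S2 = "({..<n1} \<times> {..<n2}) \<rightarrow>\<^sub>E {..<GG e}"
  have ne: "BISO n1 n2 \<noteq> {}" using BISO_ne by blast
  have f1: "finite ?S1" by (intro finite_PiE) auto
  have c1: "\<forall>x\<in>BISO n1 n2. \<forall>y\<in>BISO n1 n2. E1 n1 n2 e x = E1 n1 n2 e y \<longrightarrow> d x y \<le> eps"
    using E1_close[OF e] dd by blast
  note L1 = ln_cov_code[OF f1 _ c1 ne]
  have "card ?S1 = (n1 + 1) ^ ((GG e - 1) * n2)" by (simp add: card_PiE card_cartesian_product)
  then have "ln (real (card ?S1)) = real (GG e - 1) * real n2 * ln (real n1 + 1)"
    by (simp add: ln_realpow add.commute)
  then show "ln (real (covering_number eps (BISO n1 n2) d)) \<le> real (GG e - 1) * real n2 * ln (real n1 + 1)"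
    using L1(1) E1_in by metis
  show "\<exists>T. covers eps (BISO n1 n2) d T" using L1(2) E1_in by metis
  have f2: "finite ?S2" by (intro finite_PiE) auto
  have c2: "\<forall>x\<in>BISO n1 n2. \<forall>y\<in>BISO n1 n2. E2 n1 n2 e x = E2 n1 n2 e y \<longrightarrow> d x y \<le> eps"
    using E2_close[OF e] dd by blast
  note L2 = ln_cov_code[OF f2 _ c2 ne]
  have "card ?S2 = GG e ^ (n1 * n2)" by (simp add: card_PiE card_cartesian_product)
  moreover have "GG e \<ge> 1" using GG_ge[OF e] by simp
  ultimately have "ln (real (card ?S2)) = real n1 * real n2 * ln (real (GG e))"
    by (simp add: ln_realpow)
  then show "ln (real (covering_number eps (BISO n1 n2) d)) \<le> real n1 * real n2 * ln (real (GG e))"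
    using L2(1) E2_in[OF e] by metis
qed

definition aa :: "nat \<Rightarrow> nat \<Rightarrow> nat" where "aa n1 n2 = n1 div n2"
definition Wm :: "nat \<Rightarrow> nat \<Rightarrow> (nat \<Rightarrow> nat \<Rightarrow> real) \<Rightarrow> nat \<Rightarrow> nat \<Rightarrow> real" where
  "Wm n1 n2 M = (\<lambda>i j. if i < n1 \<and> j < aa n1 n2 * n2 then M i (j div aa n1 n2) else 1)"

lemma aa_facts: assumes "1 \<le> n2" "n2 \<le> n1"
  shows "1 \<le> aa n1 n2" "aa n1 n2 * n2 \<le> n1" "n1 < (aa n1 n2 + 1) * n2"
proof -
  show "1 \<le> aa n1 n2" unfolding aa_def using assms by (simp add: Suc_le_eq div_greater_zero_iff)
  show "aa n1 n2 * n2 \<le> n1" unfolding aa_def by simp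
  have "n1 = n1 div n2 * n2 + n1 mod n2" by (rule div_mult_mod_eq[symmetric])
  moreover have "n1 mod n2 < n2" using assms by simp
  moreover have "(n1 div n2 + 1) * n2 = n1 div n2 * n2 + n2" by simp
  ultimately show "n1 < (aa n1 n2 + 1) * n2" unfolding aa_def by linarith
qed

lemma W_mono:
  assumes M: "M \<in> BISO n1 n2" and n: "1 \<le> n2" "n2 \<le> n1" and K: "n1 \<le> 2 ^ K"
  shows "mono_sq (2^K) (Wm n1 n2 M)"
proof -
  note af = aa_facts[OF n]
  let ?a = "aa n1 n2"
  have jd: "j div ?a < n2" if "j < ?a * n2" for j
    using that af(1) by (simp add: div_less_iff_less_mult mult.commute)
  have r: "0 \<le> Wm n1 n2 M i j \<and> Wm n1 n2 M i j \<le> 1" for i j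
    unfolding Wm_def using BISO_D(1)[OF M _ jd] by auto
  have mo: "Wm n1 n2 M i j \<le> Wm n1 n2 M i' j'" if "i \<le> i'" "j \<le> j'" for i i' j j'
  proof (cases "i' < n1 \<and> j' < ?a * n2")
    case True
    then have c: "i < n1 \<and> j < ?a * n2" using that by auto
    have "M i (j div ?a) \<le> M i' (j div ?a)" using BISO_D(2)[OF M that(1)] True jd c by auto
    also have "\<dots> \<le> M i' (j' div ?a)" using BISO_D(3)[OF M _ div_le_mono[OF that(2)]] True jd by auto
    finally show ?thesis unfolding Wm_def using True c by simp
  next
    case False
    then show ?thesis using r[of i j] unfolding Wm_def by auto
  qed
  show ?thesis unfolding mono_sq_def using r mo by blast
qed

lemma sum_div_group: "(\<Sum>j<a * n. g (j div a)) = real a * (\<Sum>j<n. g j)" for g :: "nat \<Rightarrow> real"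
proof (cases "a = 0")
  case True then show ?thesis by simp
next
  case False
  have "(\<Sum>j<a * n. g (j div a)) = (\<Sum>j<n * a. g (j div a))" by (simp add: mult.commute)
  also have "\<dots> = (\<Sum>m<n. \<Sum>j\<in>{m * a..<m * a + a}. g (j div a))" by (rule sum.nat_group[symmetric])
  also have "\<dots> = (\<Sum>m<n. \<Sum>j\<in>{m * a..<m * a + a}. g m)"
  proof (intro sum.cong refl)
    fix m j assume "j \<in> {m * a..<m * a + a}"
    then have "j div a = m" by (intro div_nat_eqI) (auto simp: mult.commute)
    then show "g (j div a) = g m" by simp
  qed
  also have "\<dots> = real a * (\<Sum>j<n. g j)" by (simp add: sum_distrib_left)
  finally show ?thesis .
qed

lemma W_sum:
  assumes n: "1 \<le> n2" "n2 \<le> n1" and K: "n1 \<le> 2 ^ K"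
  shows "real (aa n1 n2) * (\<Sum>i<n1. \<Sum>j<n2. (M i j - M' i j)\<^sup>2)
     \<le> (\<Sum>i<(2::nat)^K. \<Sum>j<(2::nat)^K. (Wm n1 n2 M i j - Wm n1 n2 M' i j)\<^sup>2)"
proof -
  note af = aa_facts[OF n]
  let ?a = "aa n1 n2"
  have "real ?a * (\<Sum>i<n1. \<Sum>j<n2. (M i j - M' i j)\<^sup>2) = (\<Sum>i<n1. real ?a * (\<Sum>j<n2. (M i j - M' i j)\<^sup>2))"
    by (simp add: sum_distrib_left)
  also have "\<dots> = (\<Sum>i<n1. \<Sum>j<?a * n2. (M i (j div ?a) - M' i (j div ?a))\<^sup>2)"
    by (rule sum.cong[OF refl]) (rule sum_div_group[symmetric])
  also have "\<dots> = (\<Sum>i<n1. \<Sum>j<?a * n2. (Wm n1 n2 M i j - Wm n1 n2 M' i j)\<^sup>2)"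
    by (intro sum.cong refl) (simp add: Wm_def)
  also have "\<dots> \<le> (\<Sum>i<n1. \<Sum>j<(2::nat)^K. (Wm n1 n2 M i j - Wm n1 n2 M' i j)\<^sup>2)"
    using af(2) K by (intro sum_mono sum_mono2) auto
  also have "\<dots> \<le> (\<Sum>i<(2::nat)^K. \<Sum>j<(2::nat)^K. (Wm n1 n2 M i j - Wm n1 n2 M' i j)\<^sup>2)"
    using K by (intro sum_mono2 sum_nonneg) auto
  finally show ?thesis .
qed

lemma K_ex: fixes n1 :: nat assumes "1 \<le> n1" shows "\<exists>K. n1 \<le> 2 ^ K \<and> 2 ^ K < 2 * n1"
proof -
  define K where "K = (LEAST K. n1 \<le> 2 ^ K)"
  have ex: "n1 \<le> 2 ^ n1" using less_exp[of n1] by simp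
  have a: "n1 \<le> 2 ^ K" unfolding K_def by (rule LeastI[of _ n1]) (rule ex)
  have "2 ^ K < 2 * n1"
  proof (cases K)
    case 0 then show ?thesis using assms by simp
  next
    case (Suc k)
    then have "\<not> n1 \<le> 2 ^ k" using not_less_Least[of k "\<lambda>K. n1 \<le> 2 ^ K"] K_def by auto
    then show ?thesis using Suc by simp
  qed
  then show ?thesis using a by blast
qed

theorem quad_cov:
  assumes n: "1 \<le> n2" "n2 \<le> n1" and e: "eps > 0"
    and mm: "576 * (real m + 1) * (real n1 * real n2) \<le> eps\<^sup>2 * 2 ^ m"
  shows "ln (real (covering_number eps (BISO n1 n2) (frob_dist n1 n2))) \<le> 28 * 2 ^ m * (real m + 1) * ln 2"
    "\<exists>T. covers eps (BISO n1 n2) (frob_dist n1 n2) T"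
proof -
  obtain K where K: "n1 \<le> 2 ^ K" "2 ^ K < 2 * n1" using K_ex[of n1] n by auto
  note af = aa_facts[OF n]
  let ?a = "aa n1 n2"
  define E where "E M = code K m (Wm n1 n2 M)" for M
  have fin: "finite (codes m (min K m))" using codes_card by blast
  have inS: "\<forall>M\<in>BISO n1 n2. E M \<in> codes m (min K m)"
    unfolding E_def code_def using codes_in[OF W_mono[OF _ n K(1)]] by simp
  have fib: "\<forall>x\<in>BISO n1 n2. \<forall>y\<in>BISO n1 n2. E x = E y \<longrightarrow> frob_dist n1 n2 x y \<le> eps"
  proof (intro ballI impI)
    fix x y assume x: "x \<in> BISO n1 n2" and y: "y \<in> BISO n1 n2" and eq: "E x = E y"
    define F where "F = (\<Sum>i<n1. \<Sum>j<n2. (x i j - y i j)\<^sup>2)"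
    have F0: "0 \<le> F" unfolding F_def by (intro sum_nonneg) auto
    have "real ?a * F \<le> 72 * real (Suc (min K m)) * 4 ^ K / 2 ^ m"
      using W_sum[OF n K(1), of x y] sq_err[OF W_mono[OF x n K(1)] W_mono[OF y n K(1)] eq[unfolded E_def]]
      unfolding F_def by linarith
    also have "\<dots> \<le> 72 * (real m + 1) * 4 ^ K / 2 ^ m"
      by (intro divide_right_mono mult_right_mono mult_left_mono) auto
    also have "\<dots> \<le> 72 * (real m + 1) * (8 * real ?a * (real n1 * real n2)) / 2 ^ m"
    proof -
      have "(4::real) ^ K = real (2 ^ K) * real (2 ^ K)" by (simp flip: power_mult_distrib)
      also have "\<dots> \<le> real (2 * n1) * real (2 * n1)"
      proof -
        have "real (2 ^ K) \<le> real (2 * n1)" using K(2) by (simp only: of_nat_le_iff)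
        then show ?thesis by (intro mult_mono) auto
      qed
      also have "\<dots> \<le> 8 * real ?a * (real n1 * real n2)"
      proof -
        have "real n1 < (real ?a + 1) * real n2" using af(3) by (metis of_nat_1 of_nat_add of_nat_less_iff of_nat_mult)
        moreover have "real ?a + 1 \<le> 2 * real ?a" using af(1) by simp
        ultimately have "real n1 \<le> 2 * real ?a * real n2"
          by (smt (verit) mult_right_mono of_nat_0_le_iff)
        then have "real n1 * real n1 \<le> real n1 * (2 * real ?a * real n2)" by (intro mult_left_mono) auto
        then show ?thesis by (simp add: algebra_simps)
      qed
      finally show ?thesis by (intro divide_right_mono mult_left_mono) auto
    qed
    also have "\<dots> = real ?a * (576 * (real m + 1) * (real n1 * real n2) / 2 ^ m)" by (simp add: field_simps)
    finally have aF: "real ?a * F \<le> real ?a * (576 * (real m + 1) * (real n1 * real n2) / 2 ^ m)" .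
    have "F \<le> 576 * (real m + 1) * (real n1 * real n2) / 2 ^ m"
      by (rule mult_left_le_imp_le[OF aF]) (use af(1) in simp)
    also have "\<dots> \<le> eps\<^sup>2" using mm by (simp add: divide_le_eq)
    finally have "sqrt F \<le> sqrt (eps\<^sup>2)" by (rule real_sqrt_le_mono)
    then show "frob_dist n1 n2 x y \<le> eps" unfolding frob_dist_def F_def using e by simp
  qed
  note L = ln_cov_code[OF fin inS fib]
  have ne: "BISO n1 n2 \<noteq> {}" using BISO_ne by blast
  show "\<exists>T. covers eps (BISO n1 n2) (frob_dist n1 n2) T" using L(2)[OF ne] .
  have c: "card (codes m (min K m)) \<le> (2 ^ (28 * 2 ^ m)) ^ Suc (min K m)" using codes_card by blast
  also have "\<dots> = 2 ^ (28 * 2 ^ m * Suc (min K m))" by (rule power_mult[symmetric])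
  also have "\<dots> \<le> 2 ^ (28 * 2 ^ m * (m + 1))" by (intro power_increasing) auto
  finally have "real (card (codes m (min K m))) \<le> 2 ^ (28 * 2 ^ m * (m + 1))"
    by (metis of_nat_le_iff of_nat_numeral of_nat_power)
  moreover have "card (codes m (min K m)) > 0"
    using inS ne fin by (metis card_gt_0_iff empty_iff equals0I)
  ultimately have "ln (real (card (codes m (min K m)))) \<le> ln (2 ^ (28 * 2 ^ m * (m + 1)))" by simp
  also have "\<dots> = 28 * 2 ^ m * (real m + 1) * ln 2" by (simp add: ln_realpow algebra_simps)
  finally show "ln (real (covering_number eps (BISO n1 n2) (frob_dist n1 n2))) \<le> 28 * 2 ^ m * (real m + 1) * ln 2"
    using L(1)[OF ne] by linarith
qed

lemma frob_perm:
  assumes p: "p permutes {..<n1}" and s: "s permutes {..<n2}"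
  shows "frob_dist n1 n2 (perm_mat A p s) (perm_mat B p s) = frob_dist n1 n2 A B"
proof -
  have "(\<Sum>i<n1. \<Sum>j<n2. (A (p i) (s j) - B (p i) (s j))\<^sup>2) = (\<Sum>i<n1. \<Sum>j<n2. (A (p i) j - B (p i) j)\<^sup>2)"
    by (rule sum.cong[OF refl]) (rule sum.permute[OF s, symmetric, unfolded comp_def])
  also have "\<dots> = (\<Sum>i<n1. \<Sum>j<n2. (A i j - B i j)\<^sup>2)"
    by (rule sum.permute[OF p, symmetric, unfolded comp_def])
  finally show ?thesis unfolding frob_dist_def perm_mat_def by simp
qed

lemma sup_perm:
  assumes p: "p permutes {..<n1}" and s: "s permutes {..<n2}"
  shows "sup_dist n1 n2 (perm_mat A p s) (perm_mat B p s) = sup_dist n1 n2 A B"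
proof -
  let ?f = "\<lambda>(i,j). \<bar>A i j - B i j\<bar>"
  let ?g = "\<lambda>(i::nat,j::nat). (p i, s j)"
  have im: "?g ` ({..<n1} \<times> {..<n2}) = {..<n1} \<times> {..<n2}"
    unfolding image_paired_Times permutes_image[OF p] permutes_image[OF s] ..
  have "(\<lambda>(i,j). \<bar>A (p i) (s j) - B (p i) (s j)\<bar>) ` ({..<n1} \<times> {..<n2}) = ?f ` (?g ` ({..<n1} \<times> {..<n2}))"
    by (auto simp: image_iff)
  then show ?thesis unfolding sup_dist_def perm_mat_def im by simp
qed

lemma perm_cov:
  assumes T: "covers eps (BISO n1 n2) d T"
    and inv: "\<And>p s A B. p permutes {..<n1} \<Longrightarrow> s permutes {..<n2} \<Longrightarrow> d (perm_mat A p s) (perm_mat B p s) = d A B"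
  shows "\<exists>T'. covers eps (Perm_rc n1 n2) d T' \<and> card T' \<le> fact n1 * fact n2 * card T"
proof -
  let ?P1 = "{p. p permutes {..<n1}}" and ?P2 = "{s. s permutes {..<n2}}"
  let ?h = "\<lambda>(p, s, M). perm_mat M p s"
  define T' where "T' = ?h ` (?P1 \<times> ?P2 \<times> T)"
  have fT: "finite T" using T unfolding covers_def by blast
  have fI: "finite (?P1 \<times> ?P2 \<times> T)" using fT finite_permutations by blast
  have "card T' \<le> card (?P1 \<times> ?P2 \<times> T)" unfolding T'_def by (rule card_image_le[OF fI])
  also have "\<dots> = fact n1 * fact n2 * card T" by (simp add: card_cartesian_product card_permutations)
  finally have c: "card T' \<le> fact n1 * fact n2 * card T" .
  have sub: "T' \<subseteq> Perm_rc n1 n2" using T unfolding T'_def covers_def Perm_rc_def by auto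
  have cov: "\<forall>x\<in>Perm_rc n1 n2. \<exists>t\<in>T'. d x t \<le> eps"
  proof
    fix x assume "x \<in> Perm_rc n1 n2"
    then obtain p s M where ps: "p permutes {..<n1}" "s permutes {..<n2}" "M \<in> BISO n1 n2" "x = perm_mat M p s"
      unfolding Perm_rc_def by auto
    obtain t where t: "t \<in> T" "d M t \<le> eps" using T ps(3) unfolding covers_def by blast
    have "perm_mat t p s \<in> T'" unfolding T'_def using ps t(1) by force
    moreover have "d x (perm_mat t p s) \<le> eps" using inv[OF ps(1,2)] ps(4) t(2) by simp
    ultimately show "\<exists>t\<in>T'. d x t \<le> eps" by blast
  qed
  have "finite T'" unfolding T'_def using fI by blast
  then show ?thesis using c sub cov unfolding covers_def by blast
qed

lemma Perm_ne: "(\<lambda>i j. 0) \<in> Perm_rc n1 n2"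
proof -
  have "perm_mat (\<lambda>i j. 0) id id \<in> Perm_rc n1 n2" unfolding Perm_rc_def
    by (rule UN_I[of id], simp add: permutes_id, rule UN_I[of id], simp add: permutes_id, rule imageI, rule BISO_ne)
  then show ?thesis by (simp add: perm_mat_def)
qed

lemma ln_fact_le: "ln (fact n :: real) \<le> real n * ln (real n)"
proof (cases "n = 0")
  case True then show ?thesis by simp
next
  case False
  have "(fact n :: real) \<le> real (n ^ n)" by (rule fact_le_power)
  then have "ln (fact n :: real) \<le> ln (real (n ^ n))" using False by (subst ln_le_cancel_iff) auto
  then show ?thesis using False by (simp add: ln_realpow)
qed

lemma ln_perm:
  assumes T: "covers eps (BISO n1 n2) d T" and n: "1 \<le> n2" "n2 \<le> n1"
    and inv: "\<And>p s A B. p permutes {..<n1} \<Longrightarrow> s permutes {..<n2} \<Longrightarrow> d (perm_mat A p s) (perm_mat B p s) = d A B"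
  shows "ln (real (covering_number eps (Perm_rc n1 n2) d))
      \<le> 2 * real n1 * ln (real n1) + ln (real (covering_number eps (BISO n1 n2) d))"
proof -
  obtain T0 where T0: "covers eps (BISO n1 n2) d T0" "card T0 = covering_number eps (BISO n1 n2) d"
    using cov_ex[OF T] by blast
  obtain T' where T': "covers eps (Perm_rc n1 n2) d T'" "card T' \<le> fact n1 * fact n2 * card T0"
    using perm_cov[OF T0(1) inv] by blast
  have c1: "1 \<le> covering_number eps (Perm_rc n1 n2) d" using cov_pos[OF T'(1)] Perm_ne by blast
  have c2: "1 \<le> covering_number eps (BISO n1 n2) d" using cov_pos[OF T0(1)] BISO_ne by blast
  have "covering_number eps (Perm_rc n1 n2) d \<le> fact n1 * fact n2 * covering_number eps (BISO n1 n2) d"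
    using cov_le[OF T'(1)] T'(2) T0(2) by simp
  then have "real (covering_number eps (Perm_rc n1 n2) d) \<le> real (fact n1 * fact n2 * covering_number eps (BISO n1 n2) d)"
    by (rule of_nat_mono)
  then have "real (covering_number eps (Perm_rc n1 n2) d) \<le> fact n1 * fact n2 * real (covering_number eps (BISO n1 n2) d)"
    by simp
  then have "ln (real (covering_number eps (Perm_rc n1 n2) d)) \<le> ln (fact n1 * fact n2 * real (covering_number eps (BISO n1 n2) d))"
    using c1 by simp
  also have "\<dots> = ln (fact n1) + ln (fact n2) + ln (real (covering_number eps (BISO n1 n2) d))"
    using c2 by (simp add: ln_mult)
  also have "ln (fact n1 :: real) + ln (fact n2) \<le> 2 * real n1 * ln (real n1)"
  proof -
    have "ln (fact n2 :: real) \<le> real n2 * ln (real n2)" by (rule ln_fact_le)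
    also have "\<dots> \<le> real n1 * ln (real n1)" using n by (intro mult_mono) auto
    finally show ?thesis using ln_fact_le[of n1] by simp
  qed
  finally show ?thesis by simp
qed

definition Hm :: "nat \<Rightarrow> nat \<Rightarrow> nat \<Rightarrow> nat \<Rightarrow> real" where
  "Hm n1 n2 = (\<lambda>i j. if i < n1 \<and> j < n2 then 1/2 else 0)"

lemma Hm_in: "Hm n1 n2 \<in> BISO n1 n2" "Hm n1 n2 \<in> Perm_rc n1 n2"
proof -
  show h: "Hm n1 n2 \<in> BISO n1 n2" unfolding BISO_def Hm_def by auto
  have "perm_mat (Hm n1 n2) id id \<in> Perm_rc n1 n2" unfolding Perm_rc_def
    by (rule UN_I[of id], simp add: permutes_id, rule UN_I[of id], simp add: permutes_id, rule imageI, rule h)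
  then show "Hm n1 n2 \<in> Perm_rc n1 n2" by (simp add: perm_mat_def)
qed

lemma Perm_range: "x \<in> Perm_rc n1 n2 \<Longrightarrow> i < n1 \<Longrightarrow> j < n2 \<Longrightarrow> 0 \<le> x i j \<and> x i j \<le> 1"
proof -
  assume x: "x \<in> Perm_rc n1 n2" and ij: "i < n1" "j < n2"
  then obtain p s M where ps: "p permutes {..<n1}" "s permutes {..<n2}" "M \<in> BISO n1 n2" "x = perm_mat M p s"
    unfolding Perm_rc_def by auto
  have "p i < n1" "s j < n2" using permutes_in_image[OF ps(1), of i] permutes_in_image[OF ps(2), of j] ij by auto
  then show ?thesis using BISO_D(1)[OF ps(3)] ps(4) by (simp add: perm_mat_def)
qed

lemma triv_cov:
  assumes C: "C = BISO n1 n2 \<or> C = Perm_rc n1 n2" and n: "1 \<le> n1" "1 \<le> n2"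
    and d: "d = frob_dist n1 n2 \<and> sqrt (real n1 * real n2) / 2 \<le> eps \<or> d = sup_dist n1 n2 \<and> 1/2 \<le> eps"
  shows "ln (real (covering_number eps C d)) = 0"
proof -
  have r: "\<And>x i j. x \<in> C \<Longrightarrow> i < n1 \<Longrightarrow> j < n2 \<Longrightarrow> 0 \<le> x i j \<and> x i j \<le> 1"
    using C BISO_D(1) Perm_range by blast
  have H: "Hm n1 n2 \<in> C" using C Hm_in by blast
  have close: "\<bar>x i j - Hm n1 n2 i j\<bar> \<le> 1/2" if "x \<in> C" "i < n1" "j < n2" for x i j
  proof -
    have "0 \<le> x i j" "x i j \<le> 1" using r[OF that] by auto
    then have "\<bar>x i j - 1/2\<bar> \<le> 1/2" by (simp only: abs_le_iff) linarith
    then show ?thesis using that(2,3) unfolding Hm_def by simp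
  qed
  have cv: "covers eps C d {Hm n1 n2}"
    unfolding covers_def
  proof (intro conjI ballI)
    fix x assume x: "x \<in> C"
    show "\<exists>t\<in>{Hm n1 n2}. d x t \<le> eps"
    proof (cases "d = frob_dist n1 n2 \<and> sqrt (real n1 * real n2) / 2 \<le> eps")
      case True
      have "frob_dist n1 n2 x (Hm n1 n2) \<le> sqrt (real n1 * real n2) * (1/2)"
        by (rule entry_frob) (use close[OF x] in auto)
      then show ?thesis using True by simp
    next
      case False
      then have "d = sup_dist n1 n2" "1/2 \<le> eps" using d by auto
      have "sup_dist n1 n2 x (Hm n1 n2) \<le> 1/2"
        by (rule entry_sup) (use close[OF x] n in auto)
      then show ?thesis using \<open>d = sup_dist n1 n2\<close> \<open>1/2 \<le> eps\<close> by simp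
    qed
  qed (use H in auto)
  have "covering_number eps C d \<le> 1" using cov_le[OF cv] by simp
  moreover have "1 \<le> covering_number eps C d" using cov_pos[OF cv] H by blast
  ultimately show ?thesis by simp
qed

lemma ln2_half: "1/2 \<le> ln (2::real)"
proof -
  have "exp (1/2::real) * exp (1/2) = exp 1" by (simp flip: exp_add)
  also have "\<dots> \<le> 3" by (rule exp_le)
  finally have f: "exp (1/2::real) * exp (1/2) \<le> 3" .
  have e: "exp (1/2::real) \<le> 2"
  proof (rule ccontr)
    assume "\<not> exp (1/2::real) \<le> 2"
    then have "2 < exp (1/2::real)" by simp
    then have "2 * 2 < exp (1/2::real) * exp (1/2)" by (intro mult_strict_mono) auto
    then show False using f by simp
  qed
  have "ln (exp (1/2::real)) \<le> ln 2" using e by (subst ln_le_cancel_iff) auto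
  then show ?thesis by simp
qed

lemma two_pow_ge: "real k + 1 \<le> 2 ^ k"
proof (induction k)
  case 0 then show ?case by simp
next
  case (Suc k)
  have "real (Suc k) + 1 = (real k + 1) + 1" by simp
  also have "\<dots> \<le> 2 ^ k + 2 ^ k" using Suc.IH by (simp add: one_le_power)
  also have "\<dots> = 2 ^ Suc k" by simp
  finally show ?case .
qed

lemma T1_arith:
  fixes x :: real
  assumes x: "4 \<le> x"
  shows "\<exists>m::nat. 576 * (real m + 1) * x \<le> 2 ^ m \<and>
           28 * 2 ^ m * (real m + 1) * ln 2 \<le> 10^9 * x * (ln x / 2)\<^sup>2"
proof -
  define L where "L = ln x / 2"
  have x0: "x > 0" using x by simp
  have l2: "1/2 \<le> ln (2::real)" "ln (2::real) \<le> 1" using ln2_half ln_2_less_1 by auto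
  have lnx: "ln 4 \<le> ln x" using x by simp
  have "ln (4::real) = 2 * ln 2" using ln_realpow[of 2 2] by simp
  then have L1: "1/2 \<le> L" using lnx l2 unfolding L_def by linarith
  define k where "k = nat \<lceil>log 2 x\<rceil>"
  have lg: "log 2 x = ln x / ln 2" by (simp add: log_def)
  have lgpos: "0 \<le> log 2 x" using x by simp
  have k1: "log 2 x \<le> real k" unfolding k_def using lgpos by linarith
  have k2: "real k \<le> log 2 x + 1" unfolding k_def using lgpos by linarith
  have xk: "x \<le> 2 ^ k"
  proof -
    have "x = 2 powr (log 2 x)" using x0 by simp
    also have "\<dots> \<le> 2 powr (real k)" using k1 by (intro powr_mono) auto
    also have "\<dots> = 2 ^ k" by (simp add: powr_realpow)
    finally show ?thesis .
  qed
  define P where "P m = (576 * (real m + 1) * x \<le> 2 ^ m)" for m :: nat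
  define m0 where "m0 = 2 * k + 30"
  have Pm0: "P m0"
  proof -
    have a: "real (2 * k + 31) \<le> 33 * 2 ^ k" using two_pow_ge[of k] by simp
    have "576 * (real m0 + 1) * x = 576 * real (2 * k + 31) * x" unfolding m0_def by simp
    also have "\<dots> \<le> 576 * (33 * 2 ^ k) * x" using a x0 by (intro mult_right_mono mult_left_mono) auto
    also have "\<dots> \<le> 2 ^ 30 * 2 ^ k * x" using x0 by (intro mult_right_mono) auto
    also have "\<dots> \<le> 2 ^ 30 * 2 ^ k * 2 ^ k" using xk by (intro mult_left_mono) auto
    also have "\<dots> = 2 ^ m0"
    proof -
      have e: "2 * k + 30 = k + (k + 30)" by simp
      have "(2::real) ^ (2 * k + 30) = 2 ^ k * (2 ^ k * 2 ^ 30)" unfolding e by (simp only: power_add)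
      then show ?thesis unfolding m0_def by (simp only: mult_ac)
    qed
    finally show ?thesis unfolding P_def .
  qed
  define m where "m = (LEAST m. P m)"
  have Pm: "P m" unfolding m_def by (rule LeastI[of _ m0]) (rule Pm0)
  have mle: "m \<le> m0" unfolding m_def by (rule Least_le) (rule Pm0)
  have pm: "2 ^ m \<le> 1152 * (real m + 1) * x"
  proof (cases m)
    case 0 then show ?thesis using x by simp
  next
    case (Suc j)
    then have "\<not> P j" using not_less_Least[of j P] m_def by auto
    then have "2 ^ j < 576 * (real j + 1) * x" unfolding P_def by simp
    then have "2 * 2 ^ j < 2 * (576 * (real j + 1) * x)" by linarith
    then have "2 * 2 ^ j < 1152 * (real j + 1) * x" by (simp add: algebra_simps)
    moreover have "1152 * (real j + 1) * x \<le> 1152 * (real m + 1) * x" using Suc x0 by simp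
    ultimately show ?thesis using Suc by simp
  qed
  have mL: "real m + 1 \<le> 74 * L"
  proof -
    have "real m + 1 \<le> real m0 + 1" using mle by simp
    also have "\<dots> = 2 * real k + 31" unfolding m0_def by simp
    also have "\<dots> \<le> 2 * (log 2 x + 1) + 31" using k2 by simp
    also have "log 2 x \<le> 4 * L"
    proof -
      have "ln x / ln 2 \<le> ln x / (1/2)" using l2 lnx \<open>ln 4 = 2 * ln 2\<close>
        by (intro divide_left_mono) auto
      then show ?thesis unfolding lg L_def by simp
    qed
    then have "2 * (log 2 x + 1) + 31 \<le> 8 * L + 33" by simp
    also have "\<dots> \<le> 74 * L" using L1 by simp
    finally show ?thesis by simp
  qed
  have "28 * 2 ^ m * (real m + 1) * ln 2 \<le> 28 * 2 ^ m * (real m + 1)"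
    using l2 mult_left_mono[of "ln 2" 1 "28 * 2 ^ m * (real m + 1)"] by simp
  also have "\<dots> \<le> 28 * (1152 * (real m + 1) * x) * (real m + 1)"
  proof -
    have "28 * 2 ^ m \<le> 28 * (1152 * (real m + 1) * x)" using pm by simp
    then show ?thesis by (intro mult_right_mono) auto
  qed
  also have "\<dots> = 32256 * x * (real m + 1)\<^sup>2" by (simp add: power2_eq_square algebra_simps)
  also have "\<dots> \<le> 32256 * x * (74 * L)\<^sup>2"
    using mL x0 by (intro mult_left_mono power_mono) auto
  also have "\<dots> \<le> 10^9 * x * L\<^sup>2" using x0 by (simp add: power_mult_distrib)
  finally show ?thesis using Pm unfolding P_def L_def by blast
qed

lemma sup_codes_ln':
  assumes e: "e > 0" and n: "1 \<le> n1" "1 \<le> n2"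
    and DD: "\<forall>A\<in>BISO n1 n2. \<forall>B\<in>BISO n1 n2. (\<forall>i j. i < n1 \<and> j < n2 \<longrightarrow> \<bar>A i j - B i j\<bar> \<le> e) \<longrightarrow> d A B \<le> eps"
  shows "ln (real (covering_number eps (BISO n1 n2) d)) \<le> real (GG e - 1) * real n2 * ln (real n1 + 1)"
    "ln (real (covering_number eps (BISO n1 n2) d)) \<le> real n1 * real n2 * ln (real (GG e))"
    "\<exists>T. covers eps (BISO n1 n2) d T"
proof -
  have dd: "\<And>A B. A \<in> BISO n1 n2 \<Longrightarrow> B \<in> BISO n1 n2 \<Longrightarrow>
        (\<forall>i j. i < n1 \<and> j < n2 \<longrightarrow> \<bar>A i j - B i j\<bar> \<le> e) \<Longrightarrow> d A B \<le> eps"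
    using DD by blast
  show "ln (real (covering_number eps (BISO n1 n2) d)) \<le> real (GG e - 1) * real n2 * ln (real n1 + 1)"
    by (rule sup_codes_ln(1)[OF e n dd])
  show "ln (real (covering_number eps (BISO n1 n2) d)) \<le> real n1 * real n2 * ln (real (GG e))"
    by (rule sup_codes_ln(2)[OF e n dd])
  show "\<exists>T. covers eps (BISO n1 n2) d T"
    by (rule sup_codes_ln(3)[OF e n dd])
qed

lemma frob_dd:
  assumes n: "1 \<le> n1" "1 \<le> n2" and e: "eps > 0"
  shows "\<And>A B. A \<in> BISO n1 n2 \<Longrightarrow> B \<in> BISO n1 n2 \<Longrightarrow>
        (\<forall>i j. i < n1 \<and> j < n2 \<longrightarrow> \<bar>A i j - B i j\<bar> \<le> eps / sqrt (real n1 * real n2)) \<Longrightarrow>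
        frob_dist n1 n2 A B \<le> eps"
proof -
  fix A B assume "\<forall>i j. i < n1 \<and> j < n2 \<longrightarrow> \<bar>A i j - B i j\<bar> \<le> eps / sqrt (real n1 * real n2)"
  then have "frob_dist n1 n2 A B \<le> sqrt (real n1 * real n2) * (eps / sqrt (real n1 * real n2))"
    using e by (intro entry_frob) auto
  also have "\<dots> = eps" using n by simp
  finally show "frob_dist n1 n2 A B \<le> eps" .
qed

lemma sup_dd:
  assumes n: "1 \<le> n1" "1 \<le> n2"
  shows "\<And>A B. A \<in> BISO n1 n2 \<Longrightarrow> B \<in> BISO n1 n2 \<Longrightarrow>
        (\<forall>i j. i < n1 \<and> j < n2 \<longrightarrow> \<bar>A i j - B i j\<bar> \<le> eps) \<Longrightarrow> sup_dist n1 n2 A B \<le> eps"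
  using entry_sup n by blast

lemma frob_cov_ex:
  assumes n: "1 \<le> n2" "n2 \<le> n1" and e: "eps > 0"
  shows "\<exists>T. covers eps (BISO n1 n2) (frob_dist n1 n2) T"
proof -
  have n1: "1 \<le> n1" using n by simp
  have pos: "eps / sqrt (real n1 * real n2) > 0" using e n by simp
  have DD: "\<forall>A\<in>BISO n1 n2. \<forall>B\<in>BISO n1 n2. (\<forall>i j. i < n1 \<and> j < n2 \<longrightarrow> \<bar>A i j - B i j\<bar> \<le> eps / sqrt (real n1 * real n2)) \<longrightarrow>
        frob_dist n1 n2 A B \<le> eps"
    using frob_dd[OF n1 n(1) e] by blast
  show ?thesis by (rule sup_codes_ln'(3)[OF pos n1 n(1) DD])
qed

lemma frob_B:
  fixes n1 n2 :: nat and eps :: real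
  assumes n: "1 \<le> n2" "n2 \<le> n1" "2 \<le> n1" and e: "0 < eps" "eps \<le> sqrt (real n1 * real n2)"
  defines "L \<equiv> ln (sqrt (real n1 * real n2) / eps)"
  shows "ln (real (covering_number eps (BISO n1 n2) (frob_dist n1 n2)))
     \<le> min (min (10^9 * (real n1 * real n2) / eps\<^sup>2 * L\<^sup>2) (10^9 * (real n1 * real n2) * L))
            (10^9 * sqrt (real n1 * real n2) / eps * real n2 * ln (real n1))"
proof -
  define N where "N = real n1 * real n2"
  define s where "s = sqrt N"
  have n1: "1 \<le> n1" using n by simp
  have N1: "1 \<le> N"
  proof -
    have "1 \<le> real n1" "1 \<le> real n2" using n by auto
    then show ?thesis unfolding N_def using mult_mono[of 1 "real n1" 1 "real n2"] by simp
  qed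
  have s0: "s > 0" unfolding s_def using N1 by simp
  have ss: "s * s = N" unfolding s_def using N1 by simp
  have L0: "0 \<le> L" unfolding L_def using e s0 unfolding s_def N_def by simp
  have ln1: "0 \<le> ln (real n1)" using n by simp
  have nonneg: "0 \<le> min (min (10^9 * (real n1 * real n2) / eps\<^sup>2 * L\<^sup>2) (10^9 * (real n1 * real n2) * L))
            (10^9 * sqrt (real n1 * real n2) / eps * real n2 * ln (real n1))"
    using L0 ln1 e by simp
  show ?thesis
  proof (cases "sqrt (real n1 * real n2) / 2 \<le> eps")
    case True
    have "ln (real (covering_number eps (BISO n1 n2) (frob_dist n1 n2))) = 0"
      using triv_cov[of "BISO n1 n2" n1 n2 "frob_dist n1 n2" eps] True n1 n(1) by blast
    then show ?thesis using nonneg by linarith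
  next
    case False
    then have es: "eps < s / 2" unfolding s_def N_def by simp
    define e' where "e' = eps / s"
    have e'0: "e' > 0" unfolding e'_def using e s0 by simp
    have ie: "1 / e' = s / eps" unfolding e'_def by simp
    have ie2: "2 < 1 / e'" unfolding ie using es e by (simp add: field_simps)
    have Le: "L = ln (1 / e')" unfolding ie L_def s_def N_def ..
    have Lln2: "ln 2 \<le> L" unfolding Le using ie2 e'0 by (subst ln_le_cancel_iff) auto
    have DD: "\<forall>A\<in>BISO n1 n2. \<forall>B\<in>BISO n1 n2. (\<forall>i j. i < n1 \<and> j < n2 \<longrightarrow> \<bar>A i j - B i j\<bar> \<le> e') \<longrightarrow> frob_dist n1 n2 A B \<le> eps"
      using frob_dd[OF n1 n(1) e(1)] unfolding e'_def s_def N_def by blast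
    note SC1 = sup_codes_ln'(1)[OF e'0 n1 n(1) DD] and SC2 = sup_codes_ln'(2)[OF e'0 n1 n(1) DD]
    have G: "1 \<le> GG e'" "real (GG e') < 1 / e' + 1" using GG_ge[OF e'0] GG_le[OF e'0] by auto
    have t3: "ln (real (covering_number eps (BISO n1 n2) (frob_dist n1 n2)))
        \<le> 10^9 * sqrt (real n1 * real n2) / eps * real n2 * ln (real n1)"
    proof -
      have g1: "real (GG e' - 1) \<le> s / eps" using G ie by (simp add: of_nat_diff)
      have l1: "ln (real n1 + 1) \<le> 2 * ln (real n1)"
      proof -
        have r2: "2 \<le> real n1" using n(3) by simp
        then have "2 * real n1 \<le> real n1 * real n1" by (intro mult_right_mono) auto
        then have "real n1 + 1 \<le> real n1 * real n1" using r2 by linarith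
        then have "ln (real n1 + 1) \<le> ln (real n1 * real n1)" using n1 by (subst ln_le_cancel_iff) auto
        also have "\<dots> = 2 * ln (real n1)" using n1 by (simp add: ln_mult)
        finally show ?thesis .
      qed
      have "real (GG e' - 1) * real n2 * ln (real n1 + 1) \<le> (s / eps) * real n2 * (2 * ln (real n1))"
        using g1 l1 n s0 e by (intro mult_mono) auto
      also have "\<dots> \<le> 10^9 * s / eps * real n2 * ln (real n1)" using s0 e ln1 by (simp add: field_simps)
      finally show ?thesis using SC1 unfolding s_def N_def by linarith
    qed
    have t2: "ln (real (covering_number eps (BISO n1 n2) (frob_dist n1 n2))) \<le> 10^9 * (real n1 * real n2) * L"
    proof -
      have "real (GG e') \<le> 2 / e'" using G ie2 by (simp add: field_simps)
      then have "ln (real (GG e')) \<le> ln (2 / e')" using G(1) e'0 by (subst ln_le_cancel_iff) auto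
      also have "\<dots> = ln 2 + L" unfolding Le using e'0 by (simp add: ln_div)
      also have "\<dots> \<le> 2 * L" using Lln2 by simp
      finally have "N * ln (real (GG e')) \<le> N * (2 * L)" using N1 by (intro mult_left_mono) auto
      also have "\<dots> \<le> 10^9 * N * L" using N1 L0 by simp
      finally show ?thesis using SC2 unfolding N_def by linarith
    qed
    have t1: "ln (real (covering_number eps (BISO n1 n2) (frob_dist n1 n2))) \<le> 10^9 * (real n1 * real n2) / eps\<^sup>2 * L\<^sup>2"
    proof -
      define x where "x = N / eps\<^sup>2"
      have x4: "4 \<le> x"
      proof -
        have "eps\<^sup>2 \<le> (s/2)\<^sup>2" using es e by (intro power_mono) auto
        also have "\<dots> = N / 4" using ss by (simp add: power2_eq_square)
        finally show ?thesis unfolding x_def using e by (simp add: field_simps)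
      qed
      obtain m :: nat where m: "576 * (real m + 1) * x \<le> 2 ^ m"
        "28 * 2 ^ m * (real m + 1) * ln 2 \<le> 10^9 * x * (ln x / 2)\<^sup>2"
        using T1_arith[OF x4] by blast
      have mm: "576 * (real m + 1) * (real n1 * real n2) \<le> eps\<^sup>2 * 2 ^ m"
      proof -
        have "576 * (real m + 1) * N = eps\<^sup>2 * (576 * (real m + 1) * x)" unfolding x_def using e by simp
        also have "\<dots> \<le> eps\<^sup>2 * 2 ^ m" using m(1) by (intro mult_left_mono) auto
        finally show ?thesis unfolding N_def .
      qed
      have lx: "ln x / 2 = L"
      proof -
        have "x = (s / eps)\<^sup>2" unfolding x_def using ss by (simp add: power2_eq_square power_divide)
        then have "ln x = 2 * ln (s / eps)" using s0 e by (simp add: ln_realpow)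
        then show ?thesis unfolding L_def s_def N_def by simp
      qed
      have "ln (real (covering_number eps (BISO n1 n2) (frob_dist n1 n2))) \<le> 28 * 2 ^ m * (real m + 1) * ln 2"
        by (rule quad_cov(1)[OF n(1,2) e(1) mm])
      also have "\<dots> \<le> 10^9 * x * L\<^sup>2" using m(2) lx by simp
      also have "\<dots> = 10^9 * (real n1 * real n2) / eps\<^sup>2 * L\<^sup>2" unfolding x_def N_def by simp
      finally show ?thesis .
    qed
    show ?thesis using t1 t2 t3 by simp
  qed
qed

lemma sup_B:
  fixes n1 n2 :: nat and eps :: real
  assumes n: "1 \<le> n2" "n2 \<le> n1" and e: "0 < eps" "eps \<le> 1"
  shows "ln (real (covering_number eps (BISO n1 n2) (sup_dist n1 n2)))
     \<le> min (real n2 / eps * ln (exp 1 * real n1)) (real n1 * real n2 * ln (exp 1 / eps))"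
    "\<exists>T. covers eps (BISO n1 n2) (sup_dist n1 n2) T"
proof -
  have n1: "1 \<le> n1" using n by simp
  have DD: "\<forall>A\<in>BISO n1 n2. \<forall>B\<in>BISO n1 n2. (\<forall>i j. i < n1 \<and> j < n2 \<longrightarrow> \<bar>A i j - B i j\<bar> \<le> eps) \<longrightarrow> sup_dist n1 n2 A B \<le> eps"
    using sup_dd[OF n1 n(1)] by blast
  note SC = sup_codes_ln'[OF e(1) n1 n(1) DD]
  show "\<exists>T. covers eps (BISO n1 n2) (sup_dist n1 n2) T" using SC(3) .
  have G: "1 \<le> GG eps" "real (GG eps) < 1 / eps + 1" using GG_ge[OF e(1)] GG_le[OF e(1)] by auto
  have e2: "2 \<le> exp (1::real)" using exp_ge_add_one_self[of 1] by simp
  have a: "real (GG eps - 1) * real n2 * ln (real n1 + 1) \<le> real n2 / eps * ln (exp 1 * real n1)"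
  proof -
    have g1: "real (GG eps - 1) \<le> 1 / eps" using G by (simp add: of_nat_diff)
    have "2 * real n1 \<le> exp 1 * real n1" using e2 by (intro mult_right_mono) auto
    moreover have "1 \<le> real n1" using n1 by simp
    ultimately have "real n1 + 1 \<le> exp 1 * real n1" by linarith
    then have l: "ln (real n1 + 1) \<le> ln (exp 1 * real n1)" using n1 by (subst ln_le_cancel_iff) auto
    have "real (GG eps - 1) * real n2 * ln (real n1 + 1) \<le> (1 / eps) * real n2 * ln (exp 1 * real n1)"
      using g1 l n1 e by (intro mult_mono) auto
    then show ?thesis by simp
  qed
  have b: "real n1 * real n2 * ln (real (GG eps)) \<le> real n1 * real n2 * ln (exp 1 / eps)"
  proof -
    have "1 / eps + 1 \<le> exp 1 / eps"
    proof -
      have "1 + eps \<le> exp 1" using e e2 by linarith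
      then have "(1 + eps) / eps \<le> exp 1 / eps" using e by (intro divide_right_mono) auto
      then show ?thesis using e by (simp add: add_divide_distrib)
    qed
    then have "real (GG eps) \<le> exp 1 / eps" using G by linarith
    then have "ln (real (GG eps)) \<le> ln (exp 1 / eps)" using G(1) e by (subst ln_le_cancel_iff) auto
    then show ?thesis by (intro mult_left_mono) auto
  qed
  show "ln (real (covering_number eps (BISO n1 n2) (sup_dist n1 n2)))
     \<le> min (real n2 / eps * ln (exp 1 * real n1)) (real n1 * real n2 * ln (exp 1 / eps))"
  proof (rule min.boundedI)
    show "ln (real (covering_number eps (BISO n1 n2) (sup_dist n1 n2))) \<le> real n2 / eps * ln (exp 1 * real n1)"
      using SC(1) a by linarith
    show "ln (real (covering_number eps (BISO n1 n2) (sup_dist n1 n2))) \<le> real n1 * real n2 * ln (exp 1 / eps)"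
      using SC(2) b by linarith
  qed
qed

theorem lemma5:
  "\<exists>c>0. \<forall>(n1::nat) (n2::nat) (eps::real). 1 \<le> n2 \<and> n2 \<le> n1 \<and> 0 < eps \<longrightarrow>
     ((2 \<le> n1 \<and> eps \<le> sqrt (real n1 * real n2) \<longrightarrow>
        (let L = ln (sqrt (real n1 * real n2) / eps);
             B = min (min (c * (real n1 * real n2) / eps\<^sup>2 * L\<^sup>2)
                          (c * (real n1 * real n2) * L))
                     (c * sqrt (real n1 * real n2) / eps * real n2 * ln (real n1))
         in ln (real (covering_number eps (Perm_rc n1 n2) (frob_dist n1 n2)))
              \<le> 2 * real n1 * ln (real n1) + B
          \<and> ln (real (covering_number eps (BISO n1 n2) (frob_dist n1 n2))) \<le> B))
    \<and> (sqrt (real n1 * real n2) < eps \<longrightarrow>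
        ln (real (covering_number eps (Perm_rc n1 n2) (frob_dist n1 n2))) = 0
      \<and> ln (real (covering_number eps (BISO n1 n2) (frob_dist n1 n2))) = 0)
    \<and> (eps \<le> 1 \<longrightarrow>
        (let B = min (real n2 / eps * ln (exp 1 * real n1))
                     (real n1 * real n2 * ln (exp 1 / eps))
         in ln (real (covering_number eps (Perm_rc n1 n2) (sup_dist n1 n2)))
              \<le> B + 2 * real n1 * ln (real n1)
          \<and> ln (real (covering_number eps (BISO n1 n2) (sup_dist n1 n2))) \<le> B))
    \<and> (1 < eps \<longrightarrow>
        ln (real (covering_number eps (Perm_rc n1 n2) (sup_dist n1 n2))) = 0
      \<and> ln (real (covering_number eps (BISO n1 n2) (sup_dist n1 n2))) = 0))"
proof (rule exI[of _ "10^9"], intro conjI allI impI)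
  show "(0::real) < 10^9" by simp
next
  fix n1 n2 :: nat and eps :: real
  assume H: "1 \<le> n2 \<and> n2 \<le> n1 \<and> 0 < eps"
  then have n: "1 \<le> n2" "n2 \<le> n1" and e: "0 < eps" by auto
  have n1: "1 \<le> n1" using n by simp
  {
    assume A: "2 \<le> n1 \<and> eps \<le> sqrt (real n1 * real n2)"
    define L where "L = ln (sqrt (real n1 * real n2) / eps)"
    define B where "B = min (min (10^9 * (real n1 * real n2) / eps\<^sup>2 * L\<^sup>2) (10^9 * (real n1 * real n2) * L))
            (10^9 * sqrt (real n1 * real n2) / eps * real n2 * ln (real n1))"
    have FB: "ln (real (covering_number eps (BISO n1 n2) (frob_dist n1 n2))) \<le> B"
      unfolding B_def L_def using frob_B[OF n _ e] A by blast
    have "ln (real (covering_number eps (Perm_rc n1 n2) (frob_dist n1 n2)))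
        \<le> 2 * real n1 * ln (real n1) + ln (real (covering_number eps (BISO n1 n2) (frob_dist n1 n2)))"
    proof -
      obtain T where T: "covers eps (BISO n1 n2) (frob_dist n1 n2) T" using frob_cov_ex[OF n e] by blast
      show ?thesis by (rule ln_perm[OF T n frob_perm])
    qed
    then have "ln (real (covering_number eps (Perm_rc n1 n2) (frob_dist n1 n2))) \<le> 2 * real n1 * ln (real n1) + B"
      using FB by linarith
    then show "let L = ln (sqrt (real n1 * real n2) / eps);
             B = min (min (10^9 * (real n1 * real n2) / eps\<^sup>2 * L\<^sup>2)
                          (10^9 * (real n1 * real n2) * L))
                     (10^9 * sqrt (real n1 * real n2) / eps * real n2 * ln (real n1))
         in ln (real (covering_number eps (Perm_rc n1 n2) (frob_dist n1 n2)))
              \<le> 2 * real n1 * ln (real n1) + B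
          \<and> ln (real (covering_number eps (BISO n1 n2) (frob_dist n1 n2))) \<le> B"
      using FB unfolding Let_def B_def L_def by blast
  }
  {
    assume A: "sqrt (real n1 * real n2) < eps"
    then have A': "sqrt (real n1 * real n2) / 2 \<le> eps" using e by simp
    show "ln (real (covering_number eps (Perm_rc n1 n2) (frob_dist n1 n2))) = 0"
      using triv_cov[of "Perm_rc n1 n2" n1 n2 "frob_dist n1 n2" eps] A' n1 n(1) by blast
    show "ln (real (covering_number eps (BISO n1 n2) (frob_dist n1 n2))) = 0"
      using triv_cov[of "BISO n1 n2" n1 n2 "frob_dist n1 n2" eps] A' n1 n(1) by blast
  }
  {
    assume A: "eps \<le> 1"
    define B where "B = min (real n2 / eps * ln (exp 1 * real n1)) (real n1 * real n2 * ln (exp 1 / eps))"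
    have SB: "ln (real (covering_number eps (BISO n1 n2) (sup_dist n1 n2))) \<le> B"
      unfolding B_def using sup_B(1)[OF n e A] .
    have "ln (real (covering_number eps (Perm_rc n1 n2) (sup_dist n1 n2)))
        \<le> 2 * real n1 * ln (real n1) + ln (real (covering_number eps (BISO n1 n2) (sup_dist n1 n2)))"
    proof -
      obtain T where T: "covers eps (BISO n1 n2) (sup_dist n1 n2) T" using sup_B(2)[OF n e A] by blast
      show ?thesis by (rule ln_perm[OF T n sup_perm])
    qed
    then show "let B = min (real n2 / eps * ln (exp 1 * real n1))
                     (real n1 * real n2 * ln (exp 1 / eps))
         in ln (real (covering_number eps (Perm_rc n1 n2) (sup_dist n1 n2)))
              \<le> B + 2 * real n1 * ln (real n1)
          \<and> ln (real (covering_number eps (BISO n1 n2) (sup_dist n1 n2))) \<le> B"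
      using SB unfolding Let_def B_def by linarith
  }
  {
    assume A: "1 < eps"
    then have A': "1/2 \<le> eps" by simp
    show "ln (real (covering_number eps (Perm_rc n1 n2) (sup_dist n1 n2))) = 0"
      using triv_cov[of "Perm_rc n1 n2" n1 n2 "sup_dist n1 n2" eps] A' n1 n(1) by blast
    show "ln (real (covering_number eps (BISO n1 n2) (sup_dist n1 n2))) = 0"
      using triv_cov[of "BISO n1 n2" n1 n2 "sup_dist n1 n2" eps] A' n1 n(1) by blast
  }
qed

end
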